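(* A finite-dimensional algebra $\Lambda$ is ext-irreducible if and only if $\Lambda$ is mono-irreducible.
   Context: $\Bbbk$ is algebraically closed. Let $\Lambda=\Bbbk Q/I$ be the path algebra of a bound quiver (for an arbitrary finite-dimensional algebra the notions are taken for a Morita-equivalent bound quiver algebra). For a dimension vector $\mathbf d\in\mathbb N^{Q_0}$, $\mathrm{rep}_\Lambda(\mathbf d)$ is the affine variety of representations $V=(V_\alpha)_{\alpha\in Q_1}$, $V_\alpha\in M_{d_{t\alpha}\times d_{s\alpha}}(\Bbbk)$, satisfying the relations in $I$. Mono-irreducibility: for dimension vectors $\mathbf e\le\mathbf d$ (componentwise), $\mathcal M_\Lambda(\mathbf e,\mathbf d)$ is the variety of triples $(V,W,f)$ with $V\in\mathrm{rep}_\Lambda(\mathbf e)$, $W\in\mathrm{rep}_\Lambda(\mathbf d)$, $f=(f_x)$, $f_x\in M_{d_x\times e_x}(\Bbbk)$, an injective homomorphism $V\to W$ (i.e. $W_\alpha f_{s\alpha}=f_{t\alpha}V_\alpha$ for all $\alpha$ and each $f_x$ injective); $\Lambda$ is mono-irreducible if all $\mathcal M_\Lambda(\mathbf e,\mathbf d)$, $\mathbf e\le\mathbf d$, are irreducible. Ext-irreducibility: for $V\in\mathrm{rep}_\Lambda(\mathbf d)$, $U\in\mathrm{rep}_\Lambda(\mathbf e)$ and $Z=(Z_\alpha)_{\alpha\in Q_1}$ with $Z_\alpha\in M_{d_{t\alpha}\times e_{s\alpha}}(\Bbbk)$, let $W^{V,Z,U}$ be the representation of $Q$ with $W^{V,Z,U}_\alpha=\begin{pmatrix}V_\alpha&Z_\alpha\\0&U_\alpha\end{pmatrix}$;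 let $\mathbb Z^{U,V}$ be the set of $Z$ such that $W^{V,Z,U}$ satisfies the relations of $I$. $\mathcal E_\Lambda(\mathbf e,\mathbf d)$ is the affine variety of triples $(U,V,Z)$ with $U\in\mathrm{rep}_\Lambda(\mathbf e)$, $V\in\mathrm{rep}_\Lambda(\mathbf d)$, $Z\in\mathbb Z^{U,V}$; $\Lambda$ is ext-irreducible if $\mathcal E_\Lambda(\mathbf e,\mathbf d)$ is irreducible for all dimension vectors $\mathbf d,\mathbf e$. *)

theory Defs
  imports "HOL-Computational_Algebra.Polynomial"
begin

definition alg_closed :: "'k::field itself \<Rightarrow> bool" where
  "alg_closed _ \<longleftrightarrow> (\<forall>p::'k poly. degree p > 0 \<longrightarrow> (\<exists>z. poly p z = 0))"

inductive_set polyfun :: "(('c \<Rightarrow> 'k::field) \<Rightarrow> 'k) set" where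
  pf_const: "(\<lambda>_. c) \<in> polyfun"
| pf_proj: "(\<lambda>x. x i) \<in> polyfun"
| pf_add: "p \<in> polyfun \<Longrightarrow> q \<in> polyfun \<Longrightarrow> (\<lambda>x. p x + q x) \<in> polyfun"
| pf_mult: "p \<in> polyfun \<Longrightarrow> q \<in> polyfun \<Longrightarrow> (\<lambda>x. p x * q x) \<in> polyfun"

definition zariski_closed :: "(('c \<Rightarrow> 'k::field) set) \<Rightarrow> bool" where
  "zariski_closed A \<longleftrightarrow> (\<exists>P \<subseteq> polyfun. A = {x. \<forall>p\<in>P. p x = 0})"

definition zariski_irreducible :: "(('c \<Rightarrow> 'k::field) set) \<Rightarrow> bool" where
  "zariski_irreducible S \<longleftrightarrow> S \<noteq> {} \<and>
     (\<forall>A B. zariski_closed A \<longrightarrow> zariski_closed B \<longrightarrow> S \<subseteq> A \<union> B \<longrightarrow> S \<subseteq> A \<or> S \<subseteq> B)"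

text \<open>A matrix is a function nat => nat => k; an m x n matrix has zero entries
outside rows < m and columns < n.\<close>
type_synonym 'k mat = "nat \<Rightarrow> nat \<Rightarrow> 'k"

definition in_mat :: "nat \<Rightarrow> nat \<Rightarrow> 'k::zero mat \<Rightarrow> bool" where
  "in_mat m n A \<longleftrightarrow> (\<forall>i j. (i \<ge> m \<or> j \<ge> n) \<longrightarrow> A i j = 0)"

definition idm :: "nat \<Rightarrow> 'k::{zero,one} mat" where
  "idm n = (\<lambda>i j. if i = j \<and> i < n then 1 else 0)"

definition mmult :: "'k::comm_semiring_0 mat \<Rightarrow> nat \<Rightarrow> 'k mat \<Rightarrow> 'k mat" where
  "mmult A n B = (\<lambda>i j. \<Sum>k<n. A i k * B k j)"

definition injective_mat :: "nat \<Rightarrow> nat \<Rightarrow> 'k::field mat \<Rightarrow> bool" where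
  "injective_mat m n A \<longleftrightarrow>
     (\<forall>v::nat \<Rightarrow> 'k. (\<forall>j\<ge>n. v j = 0) \<longrightarrow> (\<forall>i<m. (\<Sum>j<n. A i j * v j) = 0) \<longrightarrow> (\<forall>j. v j = 0))"

text \<open>A finite quiver: vertices 'v, arrows 'a (finite types), source s and target t.
A path is a pair (x, [a1,...,an]) with start vertex x, traversing a1 first.\<close>

fun valid_path :: "('a \<Rightarrow> 'v) \<Rightarrow> ('a \<Rightarrow> 'v) \<Rightarrow> 'v \<Rightarrow> 'a list \<Rightarrow> bool" where
  "valid_path s t x [] = True"
| "valid_path s t x (a # as) = (s a = x \<and> valid_path s t (t a) as)"

fun path_end :: "('a \<Rightarrow> 'v) \<Rightarrow> 'v \<Rightarrow> 'a list \<Rightarrow> 'v" where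
  "path_end t x [] = x"
| "path_end t x (a # as) = path_end t (t a) as"

definition pathalg :: "('a \<Rightarrow> 'v) \<Rightarrow> ('a \<Rightarrow> 'v) \<Rightarrow> (('v \<times> 'a list) \<Rightarrow> 'k::field) set" where
  "pathalg s t = {\<rho>. finite {p. \<rho> p \<noteq> 0} \<and> (\<forall>p. \<rho> p \<noteq> 0 \<longrightarrow> valid_path s t (fst p) (snd p))}"

text \<open>Multiplication in kQ: rho * sigma means "first sigma, then rho".\<close>
definition pmult :: "('a \<Rightarrow> 'v) \<Rightarrow> (('v \<times> 'a list) \<Rightarrow> 'k::field) \<Rightarrow> (('v \<times> 'a list) \<Rightarrow> 'k) \<Rightarrow> (('v \<times> 'a list) \<Rightarrow> 'k)" where
  "pmult t \<rho> \<sigma> = (\<lambda>(x, l). \<Sum>i\<in>{0..length l}.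
      \<rho> (path_end t x (take i l), drop i l) * \<sigma> (x, take i l))"

definition two_sided_ideal :: "('a \<Rightarrow> 'v) \<Rightarrow> ('a \<Rightarrow> 'v) \<Rightarrow> (('v \<times> 'a list) \<Rightarrow> 'k::field) set \<Rightarrow> bool" where
  "two_sided_ideal s t I \<longleftrightarrow> I \<subseteq> pathalg s t \<and> (\<lambda>_. 0) \<in> I \<and>
     (\<forall>\<rho>\<in>I. \<forall>\<sigma>\<in>I. (\<lambda>p. \<rho> p + \<sigma> p) \<in> I) \<and>
     (\<forall>\<rho>\<in>I. \<forall>c. (\<lambda>p. c * \<rho> p) \<in> I) \<and>
     (\<forall>\<rho>\<in>I. \<forall>\<sigma>\<in>pathalg s t. pmult t \<rho> \<sigma> \<in> I \<and> pmult t \<sigma> \<rho> \<in> I)"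

text \<open>Admissible ideal: R^m \<subseteq> I \<subseteq> R^2 for some m \<ge> 2, where R^k consists of the
elements of kQ supported on paths of length \<ge> k.\<close>
definition admissible_ideal :: "('a \<Rightarrow> 'v) \<Rightarrow> ('a \<Rightarrow> 'v) \<Rightarrow> (('v \<times> 'a list) \<Rightarrow> 'k::field) set \<Rightarrow> bool" where
  "admissible_ideal s t I \<longleftrightarrow> two_sided_ideal s t I \<and>
     (\<forall>\<rho>\<in>I. \<forall>p. \<rho> p \<noteq> 0 \<longrightarrow> length (snd p) \<ge> 2) \<and>
     (\<exists>m\<ge>2. \<forall>\<rho>\<in>pathalg s t. (\<forall>p. \<rho> p \<noteq> 0 \<longrightarrow> length (snd p) \<ge> m) \<longrightarrow> \<rho> \<in> I)"

text \<open>V_p for a path p = (x, [a1..an]) is V_an ... V_a1 (a d(end) x d(x) matrix).\<close>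
fun path_eval :: "('a \<Rightarrow> 'v) \<Rightarrow> ('v \<Rightarrow> nat) \<Rightarrow> ('a \<Rightarrow> 'k::field mat) \<Rightarrow> 'v \<Rightarrow> 'a list \<Rightarrow> 'k mat" where
  "path_eval t d V x [] = idm (d x)"
| "path_eval t d V x (a # as) = mmult (path_eval t d V (t a) as) (d (t a)) (V a)"

definition satisfies :: "('a \<Rightarrow> 'v) \<Rightarrow> ('v \<Rightarrow> nat) \<Rightarrow> ('a \<Rightarrow> 'k::field mat) \<Rightarrow> (('v \<times> 'a list) \<Rightarrow> 'k) \<Rightarrow> bool" where
  "satisfies t d V \<rho> \<longleftrightarrow> (\<forall>x y i j.
     (\<Sum>p\<in>{p. \<rho> p \<noteq> 0 \<and> fst p = x \<and> path_end t x (snd p) = y}.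
        \<rho> p * path_eval t d V x (snd p) i j) = 0)"

definition is_mat_family :: "('a \<Rightarrow> 'v) \<Rightarrow> ('a \<Rightarrow> 'v) \<Rightarrow> ('v \<Rightarrow> nat) \<Rightarrow> ('v \<Rightarrow> nat) \<Rightarrow> ('a \<Rightarrow> 'k::field mat) \<Rightarrow> bool" where
  "is_mat_family s t drow ecol Z \<longleftrightarrow> (\<forall>a. in_mat (drow (t a)) (ecol (s a)) (Z a))"

definition rep :: "('a \<Rightarrow> 'v) \<Rightarrow> ('a \<Rightarrow> 'v) \<Rightarrow> (('v \<times> 'a list) \<Rightarrow> 'k::field) set \<Rightarrow> ('v \<Rightarrow> nat) \<Rightarrow> ('a \<Rightarrow> 'k mat) set" where
  "rep s t I d = {V. is_mat_family s t d d V \<and> (\<forall>\<rho>\<in>I. satisfies t d V \<rho>)}"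

definition is_hom :: "('a \<Rightarrow> 'v) \<Rightarrow> ('a \<Rightarrow> 'v) \<Rightarrow> ('v \<Rightarrow> nat) \<Rightarrow> ('v \<Rightarrow> nat) \<Rightarrow> ('a \<Rightarrow> 'k::field mat) \<Rightarrow> ('a \<Rightarrow> 'k mat) \<Rightarrow> ('v \<Rightarrow> 'k mat) \<Rightarrow> bool" where
  "is_hom s t e d V W f \<longleftrightarrow> (\<forall>a. mmult (W a) (d (s a)) (f (s a)) = mmult (f (t a)) (e (t a)) (V a))"

definition monovar :: "('a \<Rightarrow> 'v) \<Rightarrow> ('a \<Rightarrow> 'v) \<Rightarrow> (('v \<times> 'a list) \<Rightarrow> 'k::field) set \<Rightarrow> ('v \<Rightarrow> nat) \<Rightarrow> ('v \<Rightarrow> nat)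
     \<Rightarrow> (('a \<Rightarrow> 'k mat) \<times> ('a \<Rightarrow> 'k mat) \<times> ('v \<Rightarrow> 'k mat)) set" where
  "monovar s t I e d = {(V, W, f). V \<in> rep s t I e \<and> W \<in> rep s t I d \<and>
      (\<forall>x. in_mat (d x) (e x) (f x) \<and> injective_mat (d x) (e x) (f x)) \<and> is_hom s t e d V W f}"

definition coords3 :: "('a \<Rightarrow> 'k mat) \<times> ('b \<Rightarrow> 'k mat) \<times> ('c \<Rightarrow> 'k mat)
     \<Rightarrow> (('a \<times> nat \<times> nat) + ('b \<times> nat \<times> nat) + ('c \<times> nat \<times> nat)) \<Rightarrow> 'k" where
  "coords3 = (\<lambda>(A, B, C) c. case c of
       Inl (a, i, j) \<Rightarrow> A a i j
     | Inr (Inl (b, i, j)) \<Rightarrow> B b i j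
     | Inr (Inr (x, i, j)) \<Rightarrow> C x i j)"

definition mono_irreducible :: "('a \<Rightarrow> 'v) \<Rightarrow> ('a \<Rightarrow> 'v) \<Rightarrow> (('v \<times> 'a list) \<Rightarrow> 'k::field) set \<Rightarrow> bool" where
  "mono_irreducible s t I \<longleftrightarrow>
     (\<forall>e d. (\<forall>x. e x \<le> d x) \<longrightarrow> zariski_irreducible (coords3 ` monovar s t I e d))"

text \<open>W^{V,Z,U}_a = [[V_a, Z_a], [0, U_a]], of dimension vector d + e.\<close>
definition blockrep :: "('a \<Rightarrow> 'v) \<Rightarrow> ('a \<Rightarrow> 'v) \<Rightarrow> ('v \<Rightarrow> nat) \<Rightarrow> ('a \<Rightarrow> 'k::field mat) \<Rightarrow> ('a \<Rightarrow> 'k mat) \<Rightarrow> ('a \<Rightarrow> 'k mat) \<Rightarrow> ('a \<Rightarrow> 'k mat)" where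
  "blockrep s t d V Z U = (\<lambda>a i j.
     if i < d (t a) then (if j < d (s a) then V a i j else Z a i (j - d (s a)))
     else (if j < d (s a) then 0 else U a (i - d (t a)) (j - d (s a))))"

definition Zset :: "('a \<Rightarrow> 'v) \<Rightarrow> ('a \<Rightarrow> 'v) \<Rightarrow> (('v \<times> 'a list) \<Rightarrow> 'k::field) set \<Rightarrow> ('v \<Rightarrow> nat) \<Rightarrow> ('v \<Rightarrow> nat)
     \<Rightarrow> ('a \<Rightarrow> 'k mat) \<Rightarrow> ('a \<Rightarrow> 'k mat) \<Rightarrow> ('a \<Rightarrow> 'k mat) set" where
  "Zset s t I e d U V = {Z. is_mat_family s t d e Z \<and>
      (\<forall>\<rho>\<in>I. satisfies t (\<lambda>x. d x + e x) (blockrep s t d V Z U) \<rho>)}"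

definition extvar :: "('a \<Rightarrow> 'v) \<Rightarrow> ('a \<Rightarrow> 'v) \<Rightarrow> (('v \<times> 'a list) \<Rightarrow> 'k::field) set \<Rightarrow> ('v \<Rightarrow> nat) \<Rightarrow> ('v \<Rightarrow> nat)
     \<Rightarrow> (('a \<Rightarrow> 'k mat) \<times> ('a \<Rightarrow> 'k mat) \<times> ('a \<Rightarrow> 'k mat)) set" where
  "extvar s t I e d = {(U, V, Z). U \<in> rep s t I e \<and> V \<in> rep s t I d \<and> Z \<in> Zset s t I e d U V}"

definition ext_irreducible :: "('a \<Rightarrow> 'v) \<Rightarrow> ('a \<Rightarrow> 'v) \<Rightarrow> (('v \<times> 'a list) \<Rightarrow> 'k::field) set \<Rightarrow> bool" where
  "ext_irreducible s t I \<longleftrightarrow> (\<forall>e d. zariski_irreducible (coords3 ` extvar s t I e d))"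

end

theory Submission
  imports Defs "Jordan_Normal_Form.Determinant"
begin

section \<open>Polynomial functions\<close>

lemma polyfun_sum:
  assumes "finite A" "\<And>a. a \<in> A \<Longrightarrow> (\<lambda>x. f a x) \<in> polyfun"
  shows "(\<lambda>x. \<Sum>a\<in>A. f a x) \<in> polyfun"
  using assms
proof (induction A rule: finite_induct)
  case empty
  then show ?case using pf_const[of 0] by simp
next
  case (insert a A)
  then show ?case by (simp add: pf_add)
qed

lemma polyfun_prod:
  assumes "finite A" "\<And>a. a \<in> A \<Longrightarrow> (\<lambda>x. f a x) \<in> polyfun"
  shows "(\<lambda>x. \<Prod>a\<in>A. f a x) \<in> polyfun"
  using assms
proof (induction A rule: finite_induct)
  case empty
  then show ?case using pf_const[of 1] by simp
next
  case (insert a A)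
  then show ?case by (simp add: pf_mult)
qed

lemma polyfun_minus: "p \<in> polyfun \<Longrightarrow> q \<in> polyfun \<Longrightarrow> (\<lambda>x. p x - q x) \<in> polyfun"
proof -
  assume p: "p \<in> polyfun" and q: "q \<in> polyfun"
  have "(\<lambda>x. (- 1) * q x) \<in> polyfun" using q pf_const pf_mult by blast
  then have "(\<lambda>x. p x + (- 1) * q x) \<in> polyfun" using p pf_add by blast
  then show ?thesis by simp
qed

lemma polyfun_comp:
  assumes "p \<in> polyfun" "\<And>c. (\<lambda>x. F x c) \<in> polyfun"
  shows "(\<lambda>x. p (F x)) \<in> polyfun"
  using assms(1)
proof (induction rule: polyfun.induct)
  case (pf_const c) then show ?case by (rule polyfun.pf_const)
next
  case (pf_proj i) then show ?case using assms(2) by simp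
next
  case (pf_add p q) from pf_add.IH show ?case by (rule polyfun.pf_add)
next
  case (pf_mult p q) from pf_mult.IH show ?case by (rule polyfun.pf_mult)
qed

lemma zcE: assumes "zariski_closed A" obtains P where "P \<subseteq> polyfun" "A = {x. \<forall>p\<in>P. p x = 0}"
  using assms unfolding zariski_closed_def by auto

lemma zc_union:
  assumes "zariski_closed A" "zariski_closed B"
  shows "zariski_closed (A \<union> B)"
proof -
  obtain P where P: "P \<subseteq> polyfun" "A = {x. \<forall>p\<in>P. p x = 0}" using assms(1) by (rule zcE)
  obtain Q where Q: "Q \<subseteq> polyfun" "B = {x. \<forall>p\<in>Q. p x = 0}" using assms(2) by (rule zcE)
  let ?R = "(\<lambda>(p,q) x. p x * q x) ` (P \<times> Q)"
  have "?R \<subseteq> polyfun" using P Q by (auto intro: pf_mult)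
  moreover have "A \<union> B = {x. \<forall>r\<in>?R. r x = 0}"
  proof (intro Set.set_eqI iffI)
    fix x assume "x \<in> A \<union> B" then show "x \<in> {x. \<forall>r\<in>?R. r x = 0}" using P Q by auto
  next
    fix x assume x: "x \<in> {x. \<forall>r\<in>?R. r x = 0}"
    show "x \<in> A \<union> B"
    proof (rule ccontr)
      assume "x \<notin> A \<union> B"
      then obtain p q where pq: "p \<in> P" "q \<in> Q" "p x \<noteq> 0" "q x \<noteq> 0" using P Q by auto
      then have m: "(\<lambda>x. p x * q x) \<in> ?R" by force
      have "\<forall>r\<in>?R. r x = 0" using x by simp
      from bspec[OF this m] have "p x * q x = 0" by simp
      then show False using pq by simp
    qed
  qed
  ultimately show ?thesis unfolding zariski_closed_def by (intro exI[of _ ?R]) simp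
qed

lemma zc_zeroset: "P \<subseteq> polyfun \<Longrightarrow> zariski_closed {x. \<forall>p\<in>P. p x = 0}"
  unfolding zariski_closed_def by (intro exI[of _ P]) simp

lemma zirrD: "zariski_irreducible S \<Longrightarrow> zariski_closed A \<Longrightarrow> zariski_closed B \<Longrightarrow> S \<subseteq> A \<union> B \<Longrightarrow> S \<subseteq> A \<or> S \<subseteq> B"
  unfolding zariski_irreducible_def by blast

lemma zirrNE: "zariski_irreducible S \<Longrightarrow> S \<noteq> {}"
  unfolding zariski_irreducible_def by blast

section \<open>Regular functions\<close>

definition reg :: "('c \<Rightarrow> 'k::field) set \<Rightarrow> (('c \<Rightarrow> 'k) \<Rightarrow> 'k) \<Rightarrow> bool" where
  "reg S \<phi> \<longleftrightarrow> (\<exists>q h. q \<in> polyfun \<and> h \<in> polyfun \<and> (\<forall>x\<in>S. h x \<noteq> 0 \<and> \<phi> x * h x = q x))"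

lemma reg_poly: "p \<in> polyfun \<Longrightarrow> reg S p"
  unfolding reg_def by (rule exI[of _ p], rule exI[of _ "\<lambda>_. 1"]) (auto intro: pf_const)

lemma reg_const: "reg S (\<lambda>_. c)"
  by (rule reg_poly) (rule pf_const)

lemma reg_add: "reg S f \<Longrightarrow> reg S g \<Longrightarrow> reg S (\<lambda>x. f x + g x)"
proof -
  assume "reg S f" "reg S g"
  then obtain q1 h1 q2 h2 where A: "q1 \<in> polyfun" "h1 \<in> polyfun" "\<forall>x\<in>S. h1 x \<noteq> 0 \<and> f x * h1 x = q1 x"
    "q2 \<in> polyfun" "h2 \<in> polyfun" "\<forall>x\<in>S. h2 x \<noteq> 0 \<and> g x * h2 x = q2 x"
    unfolding reg_def by blast
  show ?thesis unfolding reg_def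
  proof (intro exI conjI)
    show "(\<lambda>x. q1 x * h2 x + q2 x * h1 x) \<in> polyfun" using A by (intro pf_add pf_mult)
    show "(\<lambda>x. h1 x * h2 x) \<in> polyfun" using A by (intro pf_mult)
    show "\<forall>x\<in>S. h1 x * h2 x \<noteq> 0 \<and> (f x + g x) * (h1 x * h2 x) = q1 x * h2 x + q2 x * h1 x"
    proof
      fix x assume "x \<in> S"
      then have e: "h1 x \<noteq> 0" "h2 x \<noteq> 0" "f x * h1 x = q1 x" "g x * h2 x = q2 x" using A by auto
      have "(f x + g x) * (h1 x * h2 x) = (f x * h1 x) * h2 x + (g x * h2 x) * h1 x"
        by (simp add: algebra_simps)
      also have "\<dots> = q1 x * h2 x + q2 x * h1 x" by (simp only: e)
      finally show "h1 x * h2 x \<noteq> 0 \<and> (f x + g x) * (h1 x * h2 x) = q1 x * h2 x + q2 x * h1 x"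
        using e by simp
    qed
  qed
qed

lemma reg_mult: "reg S f \<Longrightarrow> reg S g \<Longrightarrow> reg S (\<lambda>x. f x * g x)"
proof -
  assume "reg S f" "reg S g"
  then obtain q1 h1 q2 h2 where A: "q1 \<in> polyfun" "h1 \<in> polyfun" "\<forall>x\<in>S. h1 x \<noteq> 0 \<and> f x * h1 x = q1 x"
    "q2 \<in> polyfun" "h2 \<in> polyfun" "\<forall>x\<in>S. h2 x \<noteq> 0 \<and> g x * h2 x = q2 x"
    unfolding reg_def by blast
  show ?thesis unfolding reg_def
  proof (intro exI conjI)
    show "(\<lambda>x. q1 x * q2 x) \<in> polyfun" using A by (intro pf_mult)
    show "(\<lambda>x. h1 x * h2 x) \<in> polyfun" using A by (intro pf_mult)
    show "\<forall>x\<in>S. h1 x * h2 x \<noteq> 0 \<and> (f x * g x) * (h1 x * h2 x) = q1 x * q2 x"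
    proof
      fix x assume "x \<in> S"
      then have e: "h1 x \<noteq> 0" "h2 x \<noteq> 0" "f x * h1 x = q1 x" "g x * h2 x = q2 x" using A by auto
      have "(f x * g x) * (h1 x * h2 x) = (f x * h1 x) * (g x * h2 x)"
        by (simp add: algebra_simps)
      also have "\<dots> = q1 x * q2 x" by (simp only: e)
      finally show "h1 x * h2 x \<noteq> 0 \<and> (f x * g x) * (h1 x * h2 x) = q1 x * q2 x"
        using e by simp
    qed
  qed
qed

lemma reg_sum:
  assumes "finite A" "\<And>a. a \<in> A \<Longrightarrow> reg S (\<lambda>x. f a x)"
  shows "reg S (\<lambda>x. \<Sum>a\<in>A. f a x)"
  using assms
proof (induction A rule: finite_induct)
  case empty
  then show ?case using reg_const[of S 0] by simp
next
  case (insert a A)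
  then show ?case by (simp add: reg_add)
qed

lemma reg_div:
  assumes "q \<in> polyfun" "h \<in> polyfun" "\<And>x. x \<in> S \<Longrightarrow> h x \<noteq> 0"
  shows "reg S (\<lambda>x. q x / h x)"
  unfolding reg_def using assms by (intro exI[of _ q] exI[of _ h]) auto

lemma reg_if: "reg S f \<Longrightarrow> reg S g \<Longrightarrow> reg S (\<lambda>x. if b then f x else g x)"
  by (cases b) auto

lemma reg_mono: "reg S f \<Longrightarrow> T \<subseteq> S \<Longrightarrow> reg T f"
  unfolding reg_def by blast

lemma reg_cong:
  assumes "reg S f" "\<And>x. x \<in> S \<Longrightarrow> f x = g x" shows "reg S g"
proof -
  obtain q h where "q \<in> polyfun" "h \<in> polyfun" "\<forall>x\<in>S. h x \<noteq> 0 \<and> f x * h x = q x"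
    using assms(1) unfolding reg_def by blast
  then show ?thesis unfolding reg_def using assms(2) by (intro exI[of _ q] exI[of _ h]) auto
qed

definition regmap :: "('c \<Rightarrow> 'k::field) set \<Rightarrow> (('c \<Rightarrow> 'k) \<Rightarrow> ('d \<Rightarrow> 'k)) \<Rightarrow> bool" where
  "regmap S F \<longleftrightarrow> (\<forall>c. reg S (\<lambda>x. F x c))"

lemma regmap_comp_poly:
  assumes "regmap S F" "p \<in> polyfun"
  shows "reg S (\<lambda>x. p (F x))"
  using assms(2)
proof (induction rule: polyfun.induct)
  case (pf_const c) then show ?case by (rule reg_const)
next
  case (pf_proj i) show ?case by (rule assms(1)[unfolded regmap_def, rule_format])
next
  case (pf_add p q) from pf_add.IH show ?case by (rule reg_add)
next
  case (pf_mult p q) from pf_mult.IH show ?case by (rule reg_mult)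
qed

lemma reg_zero_closed:
  assumes "reg S \<phi>" shows "\<exists>q. q \<in> polyfun \<and> (\<forall>x\<in>S. \<phi> x = 0 \<longleftrightarrow> q x = 0)"
proof -
  obtain q h where A: "q \<in> polyfun" "h \<in> polyfun" "\<forall>x\<in>S. h x \<noteq> 0 \<and> \<phi> x * h x = q x"
    using assms unfolding reg_def by blast
  have "\<forall>x\<in>S. \<phi> x = 0 \<longleftrightarrow> q x = 0"
  proof
    fix x assume "x \<in> S"
    then have "h x \<noteq> 0" "\<phi> x * h x = q x" using A by auto
    then show "\<phi> x = 0 \<longleftrightarrow> q x = 0" by (metis mult_eq_0_iff)
  qed
  then show ?thesis using A(1) by blast
qed

lemma preimage_closed:
  assumes F: "regmap S F" and A: "zariski_closed A"
  shows "\<exists>C. zariski_closed C \<and> (\<forall>x\<in>S. x \<in> C \<longleftrightarrow> F x \<in> A)"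
proof -
  obtain P where P: "P \<subseteq> polyfun" "A = {x. \<forall>p\<in>P. p x = 0}" using A by (rule zcE)
  have "\<forall>p\<in>P. \<exists>q. q \<in> polyfun \<and> (\<forall>x\<in>S. p (F x) = 0 \<longleftrightarrow> q x = 0)"
  proof
    fix p assume "p \<in> P"
    then have "reg S (\<lambda>x. p (F x))" using P(1) by (intro regmap_comp_poly[OF F]) blast
    then show "\<exists>q. q \<in> polyfun \<and> (\<forall>x\<in>S. p (F x) = 0 \<longleftrightarrow> q x = 0)" by (rule reg_zero_closed)
  qed
  then obtain nq where nq: "\<forall>p\<in>P. nq p \<in> polyfun \<and> (\<forall>x\<in>S. p (F x) = 0 \<longleftrightarrow> nq p x = 0)"
    by (rule bchoice[elim_format]) blast
  define C where "C = {x. \<forall>q\<in>nq ` P. q x = 0}"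
  have "zariski_closed C" unfolding C_def by (rule zc_zeroset) (use nq in blast)
  moreover have "\<forall>x\<in>S. x \<in> C \<longleftrightarrow> F x \<in> A"
    unfolding C_def P(2) using nq by auto
  ultimately show ?thesis by blast
qed

lemma irreducible_image:
  assumes irr: "zariski_irreducible S" and F: "regmap S F"
  shows "zariski_irreducible (F ` S)"
  unfolding zariski_irreducible_def
proof (intro conjI allI impI)
  show "F ` S \<noteq> {}" using zirrNE[OF irr] by auto
next
  fix A B
  assume A: "zariski_closed A" and B: "zariski_closed B" and sub: "F ` S \<subseteq> A \<union> B"
  obtain A' where A': "zariski_closed A'" "\<forall>x\<in>S. x \<in> A' \<longleftrightarrow> F x \<in> A"
    using preimage_closed[OF F A] by blast
  obtain B' where B': "zariski_closed B'" "\<forall>x\<in>S. x \<in> B' \<longleftrightarrow> F x \<in> B"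
    using preimage_closed[OF F B] by blast
  have "S \<subseteq> A' \<union> B'" using sub A' B' by blast
  then have "S \<subseteq> A' \<or> S \<subseteq> B'" using irr A'(1) B'(1) by (intro zirrD)
  then show "F ` S \<subseteq> A \<or> F ` S \<subseteq> B" using A' B' by blast
qed

lemma regmap_poly: "(\<And>c. (\<lambda>x. F x c) \<in> polyfun) \<Longrightarrow> regmap S F"
  unfolding regmap_def by (simp add: reg_poly)

lemma irreducible_pairs:
  assumes "S \<noteq> {}"
    and "\<And>a b. a \<in> S \<Longrightarrow> b \<in> S \<Longrightarrow> \<exists>T\<subseteq>S. zariski_irreducible T \<and> a \<in> T \<and> b \<in> T"
  shows "zariski_irreducible S"
  unfolding zariski_irreducible_def
proof (intro conjI allI impI)
  show "S \<noteq> {}" by fact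
  fix A B
  assume c: "zariski_closed A" "zariski_closed B" "S \<subseteq> A \<union> B"
  show "S \<subseteq> A \<or> S \<subseteq> B"
  proof (rule ccontr)
    assume "\<not> (S \<subseteq> A \<or> S \<subseteq> B)"
    then obtain a b where ab: "a \<in> S" "a \<notin> A" "b \<in> S" "b \<notin> B" by blast
    then obtain T where T: "T \<subseteq> S" "zariski_irreducible T" "a \<in> T" "b \<in> T" using assms(2) by blast
    moreover have "T \<subseteq> A \<union> B" using T(1) c(3) by blast
    ultimately have "T \<subseteq> A \<or> T \<subseteq> B" using c zirrD by blast
    then show False using ab T by blast
  qed
qed

lemma irreducible_open:
  assumes irr: "zariski_irreducible S" and D: "D \<in> polyfun" and ex: "\<exists>x\<in>S. D x \<noteq> 0"
  shows "zariski_irreducible {x\<in>S. D x \<noteq> 0}"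
  unfolding zariski_irreducible_def
proof (intro conjI allI impI)
  show "{x\<in>S. D x \<noteq> 0} \<noteq> {}" using ex by blast
  fix A B
  assume A: "zariski_closed A" and B: "zariski_closed B" and sub: "{x\<in>S. D x \<noteq> 0} \<subseteq> A \<union> B"
  obtain P where P: "P \<subseteq> polyfun" "A = {x. \<forall>p\<in>P. p x = 0}" using A by (rule zcE)
  obtain Q where Q: "Q \<subseteq> polyfun" "B = {x. \<forall>p\<in>Q. p x = 0}" using B by (rule zcE)
  define A' where "A' = {x. \<forall>p\<in>P. p x * D x = 0}"
  define B' where "B' = {x. \<forall>p\<in>Q. p x * D x = 0}"
  have eA: "A' = {x. \<forall>p\<in>(\<lambda>p x. p x * D x) ` P. p x = 0}" unfolding A'_def by auto
  have sA: "(\<lambda>p x. p x * D x) ` P \<subseteq> polyfun" using P D by (auto intro: pf_mult)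
  have cA: "zariski_closed A'" unfolding eA by (rule zc_zeroset[OF sA])
  have eB: "B' = {x. \<forall>p\<in>(\<lambda>p x. p x * D x) ` Q. p x = 0}" unfolding B'_def by auto
  have sB: "(\<lambda>p x. p x * D x) ` Q \<subseteq> polyfun" using Q D by (auto intro: pf_mult)
  have cB: "zariski_closed B'" unfolding eB by (rule zc_zeroset[OF sB])
  have "S \<subseteq> A' \<union> B'"
  proof
    fix x assume x: "x \<in> S"
    show "x \<in> A' \<union> B'"
    proof (cases "D x = 0")
      case True then show ?thesis unfolding A'_def by auto
    next
      case False then have "x \<in> A \<union> B" using sub x by blast
      then show ?thesis unfolding A'_def B'_def P by (auto simp: Q)
    qed
  qed
  then have "S \<subseteq> A' \<or> S \<subseteq> B'" using irr cA cB by (intro zirrD)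
  then show "{x\<in>S. D x \<noteq> 0} \<subseteq> A \<or> {x\<in>S. D x \<noteq> 0} \<subseteq> B"
  proof
    assume "S \<subseteq> A'" then have "{x\<in>S. D x \<noteq> 0} \<subseteq> A" unfolding A'_def P by auto
    then show ?thesis ..
  next
    assume "S \<subseteq> B'" then have "{x\<in>S. D x \<noteq> 0} \<subseteq> B" unfolding B'_def Q by auto
    then show ?thesis ..
  qed
qed

lemma polyfun_slice1:
  assumes "p \<in> polyfun" shows "(\<lambda>y. p (case_sum x y)) \<in> polyfun"
proof (rule polyfun_comp[OF assms, of "\<lambda>y. case_sum x y"])
  fix c show "(\<lambda>y. case_sum x y c) \<in> polyfun"
    by (cases c) (simp_all add: pf_const pf_proj)
qed

lemma polyfun_slice2:
  assumes "p \<in> polyfun" shows "(\<lambda>x. p (case_sum x y)) \<in> polyfun"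
proof (rule polyfun_comp[OF assms, of "\<lambda>x. case_sum x y"])
  fix c show "(\<lambda>x. case_sum x y c) \<in> polyfun"
    by (cases c) (simp_all add: pf_const pf_proj)
qed

lemma irreducible_product:
  fixes X :: "('c1 \<Rightarrow> 'k::field) set" and Y :: "('c2 \<Rightarrow> 'k) set"
  assumes X: "zariski_irreducible X" and Y: "zariski_irreducible Y"
  shows "zariski_irreducible {case_sum x y |x y. x \<in> X \<and> y \<in> Y}"
  unfolding zariski_irreducible_def
proof (intro conjI allI impI)
  show "{case_sum x y |x y. x \<in> X \<and> y \<in> Y} \<noteq> {}"
    using zirrNE[OF X] zirrNE[OF Y] by blast
  fix A B :: "('c1 + 'c2 \<Rightarrow> 'k) set"
  assume A: "zariski_closed A" and B: "zariski_closed B"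
    and sub: "{case_sum x y |x y. x \<in> X \<and> y \<in> Y} \<subseteq> A \<union> B"
  obtain P where P: "P \<subseteq> polyfun" "A = {x. \<forall>p\<in>P. p x = 0}" using A by (rule zcE)
  obtain Q where Q: "Q \<subseteq> polyfun" "B = {x. \<forall>p\<in>Q. p x = 0}" using B by (rule zcE)
  define CA where "CA = {x. \<forall>p\<in>P. \<forall>y\<in>Y. p (case_sum x y) = 0}"
  define CB where "CB = {x. \<forall>p\<in>Q. \<forall>y\<in>Y. p (case_sum x y) = 0}"
  have eA: "CA = {x. \<forall>r\<in>(\<lambda>(p,y) x. p (case_sum x y)) ` (P \<times> Y). r x = 0}" unfolding CA_def by auto
  have sA: "(\<lambda>(p,y) x. p (case_sum x y)) ` (P \<times> Y) \<subseteq> polyfun" using P polyfun_slice2 by auto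
  have cA: "zariski_closed CA" unfolding eA by (rule zc_zeroset[OF sA])
  have eB: "CB = {x. \<forall>r\<in>(\<lambda>(p,y) x. p (case_sum x y)) ` (Q \<times> Y). r x = 0}" unfolding CB_def by auto
  have sB: "(\<lambda>(p,y) x. p (case_sum x y)) ` (Q \<times> Y) \<subseteq> polyfun" using Q polyfun_slice2 by auto
  have cB: "zariski_closed CB" unfolding eB by (rule zc_zeroset[OF sB])
  have "X \<subseteq> CA \<union> CB"
  proof
    fix x assume x: "x \<in> X"
    have irrs: "zariski_irreducible ((\<lambda>y. case_sum x y) ` Y)"
    proof (rule irreducible_image[OF Y], rule regmap_poly)
      fix c show "(\<lambda>y. case_sum x y c) \<in> polyfun"
        by (cases c) (simp_all add: pf_const pf_proj)
    qed
    have "(\<lambda>y. case_sum x y) ` Y \<subseteq> A \<union> B" using sub x by blast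
    then have "(\<lambda>y. case_sum x y) ` Y \<subseteq> A \<or> (\<lambda>y. case_sum x y) ` Y \<subseteq> B"
      using irrs A B by (intro zirrD)
    then show "x \<in> CA \<union> CB"
    proof
      assume "(\<lambda>y. case_sum x y) ` Y \<subseteq> A" then have "x \<in> CA" unfolding CA_def P by auto
      then show ?thesis ..
    next
      assume "(\<lambda>y. case_sum x y) ` Y \<subseteq> B" then have "x \<in> CB" unfolding CB_def Q by auto
      then show ?thesis ..
    qed
  qed
  then have "X \<subseteq> CA \<or> X \<subseteq> CB" using X cA cB by (intro zirrD)
  then show "{case_sum x y |x y. x \<in> X \<and> y \<in> Y} \<subseteq> A \<or> {case_sum x y |x y. x \<in> X \<and> y \<in> Y} \<subseteq> B"
  proof
    assume "X \<subseteq> CA" then have "{case_sum x y |x y. x \<in> X \<and> y \<in> Y} \<subseteq> A" unfolding CA_def P by auto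
    then show ?thesis ..
  next
    assume "X \<subseteq> CB" then have "{case_sum x y |x y. x \<in> X \<and> y \<in> Y} \<subseteq> B" unfolding CB_def Q by auto
    then show ?thesis ..
  qed
qed


lemma alg_closed_infinite:
  assumes "alg_closed TYPE('k::field)"
  shows "infinite (UNIV :: 'k set)"
proof
  assume fin: "finite (UNIV :: 'k set)"
  define P :: "'k poly" where "P = (\<Prod>a\<in>UNIV. [:-a, 1:])"
  have "degree P = (\<Sum>a\<in>(UNIV::'k set). degree [:-a, 1:])"
    unfolding P_def by (rule degree_prod_eq_sum_degree) auto
  also have "\<dots> = card (UNIV :: 'k set)" by simp
  finally have dP: "degree P = card (UNIV :: 'k set)" .
  have "card (UNIV :: 'k set) > 0" using fin by (simp add: card_gt_0_iff)
  then have "degree (1 :: 'k poly) < degree P" using dP by simp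
  then have dQ: "degree (P + 1) = degree P" by (rule degree_add_eq_left)
  have "degree (P + 1) > 0" using dQ dP \<open>card (UNIV :: 'k set) > 0\<close> by simp
  then obtain z where z: "poly (P + 1) z = 0" using assms unfolding alg_closed_def by blast
  have "poly P z = (\<Prod>a\<in>UNIV. z - a)" unfolding P_def poly_prod by simp
  also have "\<dots> = 0" using fin by (intro prod_zero) auto
  finally show False using z by simp
qed

lemma polyfun_unit_poly:
  fixes p :: "(unit \<Rightarrow> 'k::field) \<Rightarrow> 'k"
  assumes "p \<in> polyfun"
  shows "\<exists>P. \<forall>y. p y = poly P (y ())"
  using assms
proof (induction rule: polyfun.induct)
  case (pf_const c) show ?case by (rule exI[of _ "[:c:]"]) simp
next
  case (pf_proj i) show ?case by (rule exI[of _ "[:0, 1:]"]) simp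
next
  case (pf_add p q)
  then obtain P Q where "\<forall>y. p y = poly P (y ())" "\<forall>y. q y = poly Q (y ())" by blast
  then show ?case by (intro exI[of _ "P + Q"]) simp
next
  case (pf_mult p q)
  then obtain P Q where "\<forall>y. p y = poly P (y ())" "\<forall>y. q y = poly Q (y ())" by blast
  then show ?case by (intro exI[of _ "P * Q"]) simp
qed

lemma univ_unit_irreducible:
  assumes inf: "infinite (UNIV :: 'k::field set)"
  shows "zariski_irreducible (UNIV :: (unit \<Rightarrow> 'k) set)"
  unfolding zariski_irreducible_def
proof (intro conjI allI impI)
  show "(UNIV :: (unit \<Rightarrow> 'k) set) \<noteq> {}" by simp
  fix A B :: "(unit \<Rightarrow> 'k) set"
  assume A: "zariski_closed A" and B: "zariski_closed B" and sub: "UNIV \<subseteq> A \<union> B"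
  obtain P where P: "P \<subseteq> polyfun" "A = {x. \<forall>p\<in>P. p x = 0}" using A by (rule zcE)
  obtain Q where Q: "Q \<subseteq> polyfun" "B = {x. \<forall>p\<in>Q. p x = 0}" using B by (rule zcE)
  show "UNIV \<subseteq> A \<or> UNIV \<subseteq> B"
  proof (rule ccontr)
    assume "\<not> (UNIV \<subseteq> A \<or> UNIV \<subseteq> B)"
    then obtain a b where "a \<notin> A" "b \<notin> B" by blast
    then obtain p q where pq: "p \<in> P" "p a \<noteq> 0" "q \<in> Q" "q b \<noteq> 0" using P Q by auto
    have "p \<in> polyfun" "q \<in> polyfun" using pq P Q by auto
    then obtain PP QQ where PP: "\<forall>y. p y = poly PP (y ())" and QQ: "\<forall>y. q y = poly QQ (y ())"
      using polyfun_unit_poly by metis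
    have z: "poly (PP * QQ) c = 0" for c
    proof -
      have "(\<lambda>_::unit. c) \<in> A \<union> B" using sub by blast
      then have "p (\<lambda>_. c) = 0 \<or> q (\<lambda>_. c) = 0" using P Q pq by auto
      then show ?thesis using PP QQ by auto
    qed
    have "PP * QQ = 0"
    proof (rule ccontr)
      assume "PP * QQ \<noteq> 0"
      then have "finite {x. poly (PP * QQ) x = 0}" by (rule poly_roots_finite)
      moreover have "{x. poly (PP * QQ) x = 0} = UNIV" using z by blast
      ultimately show False using inf by (simp only:)
    qed
    then have "PP = 0 \<or> QQ = 0" by simp
    then show False using pq PP QQ by auto
  qed
qed

lemma unit_open_irreducible:
  assumes inf: "infinite (UNIV :: 'k::field set)"
    and D: "D \<in> polyfun" and ex: "D y0 \<noteq> 0"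
  shows "zariski_irreducible {y :: unit \<Rightarrow> 'k. D y \<noteq> 0}"
proof -
  have e: "\<exists>x\<in>UNIV. D x \<noteq> 0" using ex by (intro bexI[of _ y0]) auto
  have "zariski_irreducible {x\<in>UNIV. D x \<noteq> 0}"
    by (rule irreducible_open[OF univ_unit_irreducible[OF inf] D e])
  then show ?thesis by simp
qed


lemma sum_split_at: "(m::nat) \<le> n \<Longrightarrow> (\<Sum>j<n. g j) = (\<Sum>j<m. g j) + (\<Sum>j\<in>{m..<n}. (g j :: 'a::comm_monoid_add))"
proof -
  assume "m \<le> n"
  then have "{..<n} = {..<m} \<union> {m..<n}" by auto
  moreover have "{..<m} \<inter> {m..<n} = {}" by auto
  ultimately show ?thesis by (simp add: sum.union_disjoint)
qed
lemma sum_delta_lt: "(\<Sum>k<(n::nat). (if k = j then a k else 0)) = (if j < n then a j else (0::'a::comm_monoid_add))"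
  using sum.delta[of "{..<n}" j a] by simp

lemma mmult_assoc: "mmult (mmult A n B) m C = mmult A n (mmult B m C)"
  unfolding mmult_def
  by (rule ext, rule ext) (simp add: sum_distrib_left sum_distrib_right mult.assoc sum.swap[of _ "{..<m}"])

lemma in_mat_mmult: "in_mat m k A \<Longrightarrow> in_mat k' p B \<Longrightarrow> in_mat m p (mmult A n B)"
  unfolding in_mat_def mmult_def by auto

lemma in_mat_idm: "in_mat n n (idm n)"
  unfolding in_mat_def idm_def by auto

lemma in_mat_mono: "in_mat m n A \<Longrightarrow> m \<le> m' \<Longrightarrow> n \<le> n' \<Longrightarrow> in_mat m' n' A"
  unfolding in_mat_def by auto

lemma mmult_idm_left: "in_mat n p A \<Longrightarrow> mmult (idm n) n A = A" for A :: "nat \<Rightarrow> nat \<Rightarrow> 'k::field"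
  unfolding mmult_def idm_def in_mat_def
proof (rule ext, rule ext)
  fix i j assume A: "\<forall>i j. n \<le> i \<or> p \<le> j \<longrightarrow> A i j = 0"
  show "(\<Sum>k<n. (if i = k \<and> i < n then 1 else 0) * A k j) = A i j"
  proof (cases "i < n")
    case True
    then have "(\<Sum>k<n. (if i = k \<and> i < n then 1 else 0) * A k j) = (\<Sum>k<n. if k = i then A i j else 0)"
      by (intro sum.cong) auto
    also have "\<dots> = A i j" using True by simp
    finally show ?thesis .
  next
    case False then show ?thesis using A by simp
  qed
qed

lemma mmult_idm_right: "in_mat m n A \<Longrightarrow> mmult A n (idm n) = A" for A :: "nat \<Rightarrow> nat \<Rightarrow> 'k::field"
  unfolding mmult_def idm_def in_mat_def
proof (rule ext, rule ext)
  fix i j assume A: "\<forall>i j. m \<le> i \<or> n \<le> j \<longrightarrow> A i j = 0"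
  show "(\<Sum>k<n. A i k * (if k = j \<and> k < n then 1 else 0)) = A i j"
  proof (cases "j < n")
    case True
    then have "(\<Sum>k<n. A i k * (if k = j \<and> k < n then 1 else 0)) = (\<Sum>k<n. if k = j then A i j else 0)"
      by (intro sum.cong) auto
    also have "\<dots> = A i j" using True by simp
    finally show ?thesis .
  next
    case False then show ?thesis using A by simp
  qed
qed

definition tmat :: "nat \<Rightarrow> (nat \<Rightarrow> nat \<Rightarrow> 'k::field) \<Rightarrow> 'k Matrix.mat" where
  "tmat n A = Matrix.mat n n (\<lambda>(i,j). A i j)"

definition invn :: "nat \<Rightarrow> (nat \<Rightarrow> nat \<Rightarrow> 'k::field) \<Rightarrow> nat \<Rightarrow> nat \<Rightarrow> 'k" where
  "invn n A = (\<lambda>i j. if i < n \<and> j < n then adj_mat (tmat n A) $$ (i,j) / det (tmat n A) else 0)"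

lemma tmat_carrier[simp]: "tmat n A \<in> carrier_mat n n"
  unfolding tmat_def by simp

lemma in_mat_invn: "in_mat n n (invn n A)"
  unfolding in_mat_def invn_def by auto

lemma invn_right:
  assumes d: "det (tmat n A) \<noteq> 0" and A: "in_mat n n A"
  shows "mmult A n (invn n A) = idm n"
proof (rule ext, rule ext)
  fix i j
  show "mmult A n (invn n A) i j = idm n i j"
  proof (cases "i < n \<and> j < n")
    case True
    have adj: "tmat n A * adj_mat (tmat n A) = det (tmat n A) \<cdot>\<^sub>m 1\<^sub>m n" using adj_mat[OF tmat_carrier] by blast
    have "(tmat n A * adj_mat (tmat n A)) $$ (i,j) = (\<Sum>k<n. A i k * adj_mat (tmat n A) $$ (k,j))"
      using True adj_mat(1)[OF tmat_carrier[of n A]]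
      unfolding times_mat_def scalar_prod_def tmat_def
      by (auto simp: row_def col_def atLeast0LessThan intro!: sum.cong)
    also have "\<dots> = (\<Sum>k<n. A i k * invn n A k j) * det (tmat n A)"
      unfolding invn_def using True d by (simp add: sum_distrib_right)
    finally have f: "(tmat n A * adj_mat (tmat n A)) $$ (i,j) = (\<Sum>k<n. A i k * invn n A k j) * det (tmat n A)" .
    have "(det (tmat n A) \<cdot>\<^sub>m 1\<^sub>m n) $$ (i,j) = (if i = j then det (tmat n A) else 0)"
      using True by simp
    then have "(\<Sum>k<n. A i k * invn n A k j) * det (tmat n A) = (if i = j then det (tmat n A) else 0)"
      using f adj by simp
    then have "(\<Sum>k<n. A i k * invn n A k j) = (if i = j then 1 else 0)"
    proof (cases "i = j")
      case True
      assume "(\<Sum>k<n. A i k * invn n A k j) * det (tmat n A) = (if i = j then det (tmat n A) else 0)"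
      then have "(\<Sum>k<n. A i k * invn n A k j) * det (tmat n A) = 1 * det (tmat n A)" using True by simp
      then show ?thesis using d True by (simp only: mult_cancel_right) simp
    next
      case False
      assume "(\<Sum>k<n. A i k * invn n A k j) * det (tmat n A) = (if i = j then det (tmat n A) else 0)"
      then have "(\<Sum>k<n. A i k * invn n A k j) * det (tmat n A) = 0 * det (tmat n A)" using False by simp
      then show ?thesis using d False by (simp only: mult_cancel_right) simp
    qed
    then show ?thesis unfolding mmult_def idm_def using True by simp
  next
    case False
    then show ?thesis using A unfolding mmult_def idm_def invn_def in_mat_def by auto
  qed
qed

lemma invn_left:
  assumes d: "det (tmat n A) \<noteq> 0" and A: "in_mat n n A"
  shows "mmult (invn n A) n A = idm n"
proof (rule ext, rule ext)
  fix i j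
  show "mmult (invn n A) n A i j = idm n i j"
  proof (cases "i < n \<and> j < n")
    case True
    have adj: "adj_mat (tmat n A) * tmat n A = det (tmat n A) \<cdot>\<^sub>m 1\<^sub>m n" using adj_mat[OF tmat_carrier] by blast
    have "(adj_mat (tmat n A) * tmat n A) $$ (i,j) = (\<Sum>k<n. adj_mat (tmat n A) $$ (i,k) * A k j)"
      using True adj_mat(1)[OF tmat_carrier[of n A]]
      unfolding times_mat_def scalar_prod_def tmat_def
      by (auto simp: row_def col_def atLeast0LessThan intro!: sum.cong)
    also have "\<dots> = (\<Sum>k<n. invn n A i k * A k j) * det (tmat n A)"
      unfolding invn_def using True d by (simp add: sum_distrib_right)
    finally have f: "(adj_mat (tmat n A) * tmat n A) $$ (i,j) = (\<Sum>k<n. invn n A i k * A k j) * det (tmat n A)" .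
    have "(det (tmat n A) \<cdot>\<^sub>m 1\<^sub>m n) $$ (i,j) = (if i = j then det (tmat n A) else 0)"
      using True by simp
    then have "(\<Sum>k<n. invn n A i k * A k j) * det (tmat n A) = (if i = j then det (tmat n A) else 0)"
      using f adj by simp
    then have "(\<Sum>k<n. invn n A i k * A k j) = (if i = j then 1 else 0)"
    proof (cases "i = j")
      case True
      assume "(\<Sum>k<n. invn n A i k * A k j) * det (tmat n A) = (if i = j then det (tmat n A) else 0)"
      then have "(\<Sum>k<n. invn n A i k * A k j) * det (tmat n A) = 1 * det (tmat n A)" using True by simp
      then show ?thesis using d True by (simp only: mult_cancel_right) simp
    next
      case False
      assume "(\<Sum>k<n. invn n A i k * A k j) * det (tmat n A) = (if i = j then det (tmat n A) else 0)"
      then have "(\<Sum>k<n. invn n A i k * A k j) * det (tmat n A) = 0 * det (tmat n A)" using False by simp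
      then show ?thesis using d False by (simp only: mult_cancel_right) simp
    qed
    then show ?thesis unfolding mmult_def idm_def using True by simp
  next
    case False
    then show ?thesis using A unfolding mmult_def idm_def invn_def in_mat_def by auto
  qed
qed

lemma inj_det:
  assumes A: "in_mat n n A" and inj: "injective_mat n n A"
  shows "det (tmat n A) \<noteq> 0"
proof
  assume "det (tmat n A) = 0"
  then obtain v where v: "v \<in> carrier_vec n" "v \<noteq> 0\<^sub>v n" "tmat n A *\<^sub>v v = 0\<^sub>v n"
    using det_0_iff_vec_prod_zero_field[OF tmat_carrier] by blast
  define w where "w j = (if j < n then v $ j else 0)" for j
  have "\<forall>i<n. (\<Sum>j<n. A i j * w j) = 0"
  proof (intro allI impI)
    fix i assume i: "i < n"
    have "(tmat n A *\<^sub>v v) $ i = (\<Sum>j<n. A i j * w j)"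
      using i v(1) unfolding tmat_def mult_mat_vec_def scalar_prod_def w_def
      by (auto simp: row_def atLeast0LessThan intro!: sum.cong)
    then show "(\<Sum>j<n. A i j * w j) = 0" using v(3) i by simp
  qed
  moreover have "\<forall>j\<ge>n. w j = 0" unfolding w_def by simp
  ultimately have "\<forall>j. w j = 0" using inj unfolding injective_mat_def by blast
  then have "v = 0\<^sub>v n" using v(1) unfolding w_def by (auto intro!: eq_vecI) metis
  then show False using v(2) by simp
qed

section \<open>Determinants are polynomial\<close>

lemma polyfun_det:
  assumes N: "\<And>z. N z \<in> carrier_mat n n"
    and E: "\<And>i j. i < n \<Longrightarrow> j < n \<Longrightarrow> (\<lambda>z. N z $$ (i,j)) \<in> polyfun"
  shows "(\<lambda>z. det (N z)) \<in> polyfun"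
proof -
  have dims: "dim_row (N z) = n" "dim_col (N z) = n" for z using N[of z] by auto
  have "(\<lambda>z. det (N z)) = (\<lambda>z. \<Sum>p\<in>{p. p permutes {0..<n}}. of_int (sign p) * (\<Prod>i\<in>{0..<n}. N z $$ (i, p i)))"
    by (rule ext) (simp add: det_def dims)
  also have "\<dots> \<in> polyfun"
  proof (rule polyfun_sum)
    show "finite {p. p permutes {0..<n}}" by (rule finite_permutations) simp
    fix p assume p: "p \<in> {p. p permutes {0..<n}}"
    show "(\<lambda>z. of_int (sign p) * (\<Prod>i\<in>{0..<n}. N z $$ (i, p i))) \<in> polyfun"
    proof (rule pf_mult[OF pf_const], rule polyfun_prod)
      fix i assume i: "i \<in> {0..<n}"
      then have "p i < n" using p permutes_in_image[of p "{0..<n}" i] by auto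
      then show "(\<lambda>z. N z $$ (i, p i)) \<in> polyfun" using E i by auto
    qed simp
  qed
  finally show ?thesis .
qed

lemma polyfun_det_tmat:
  assumes E: "\<And>i j. i < n \<Longrightarrow> j < n \<Longrightarrow> (\<lambda>z. M z i j) \<in> polyfun"
  shows "(\<lambda>z. det (tmat n (M z))) \<in> polyfun"
  by (rule polyfun_det) (auto simp: tmat_def E)

lemma polyfun_adj_tmat:
  assumes E: "\<And>i j. i < n \<Longrightarrow> j < n \<Longrightarrow> (\<lambda>z. M z i j) \<in> polyfun"
    and ij: "i < n" "j < n"
  shows "(\<lambda>z. adj_mat (tmat n (M z)) $$ (i,j)) \<in> polyfun"
proof -
  have "(\<lambda>z. adj_mat (tmat n (M z)) $$ (i,j)) = (\<lambda>z. (- 1) ^ (j + i) * det (mat_delete (tmat n (M z)) j i))"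
    using ij by (auto simp: adj_mat_def cofactor_def tmat_def)
  also have "\<dots> \<in> polyfun"
  proof (rule pf_mult[OF pf_const], rule polyfun_det)
    fix z show "mat_delete (tmat n (M z)) j i \<in> carrier_mat (n - 1) (n - 1)"
      by (simp add: mat_delete_def tmat_def)
  next
    fix a b assume ab: "a < n - 1" "b < n - 1"
    have "(\<lambda>z. mat_delete (tmat n (M z)) j i $$ (a, b)) =
       (\<lambda>z. M z (if a < j then a else Suc a) (if b < i then b else Suc b))"
      using ab by (auto simp: mat_delete_def tmat_def)
    also have "\<dots> \<in> polyfun" using ab by (intro E) auto
    finally show "(\<lambda>z. mat_delete (tmat n (M z)) j i $$ (a, b)) \<in> polyfun" .
  qed
  finally show ?thesis .
qed

lemma reg_invn:
  assumes E: "\<And>i j. i < n \<Longrightarrow> j < n \<Longrightarrow> (\<lambda>z. M z i j) \<in> polyfun"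
    and d: "\<And>z. z \<in> S \<Longrightarrow> det (tmat n (M z)) \<noteq> 0"
  shows "reg S (\<lambda>z. invn n (M z) i j)"
proof (cases "i < n \<and> j < n")
  case True
  have "reg S (\<lambda>z. adj_mat (tmat n (M z)) $$ (i,j) / det (tmat n (M z)))"
    by (rule reg_div[OF polyfun_adj_tmat[OF E] polyfun_det_tmat[OF E] d]) (use True in auto)
  then show ?thesis unfolding invn_def using True by simp
next
  case False
  then have "(\<lambda>z. invn n (M z) i j) = (\<lambda>z. 0)" unfolding invn_def by auto
  then show ?thesis using reg_const[of S 0] by simp
qed


lemma unit_not_in_span:
  fixes f :: "nat \<Rightarrow> nat \<Rightarrow> 'k::field"
  assumes fm: "in_mat n m f" and mn: "m < n"
  shows "\<exists>i0<n. \<not> (\<exists>c. (\<forall>i<n. (\<Sum>j<m. f i j * c j) = (if i = i0 then 1 else 0)))"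
proof (rule ccontr)
  assume "\<not> ?thesis"
  then have "\<forall>i0<n. \<exists>c. \<forall>i<n. (\<Sum>j<m. f i j * c j) = (if i = i0 then 1 else 0)" by blast
  then obtain cc where cc: "\<And>i0 i. i0 < n \<Longrightarrow> i < n \<Longrightarrow> (\<Sum>j<m. f i j * cc i0 j) = (if i = i0 then 1 else 0)"
    by metis
  define C where "C = (\<lambda>j i0. if j < m \<and> i0 < n then cc i0 j else (0::'k))"
  have Cm: "in_mat n n C" unfolding C_def in_mat_def using mn by auto
  have fC: "mmult f n C = idm n"
  proof (rule ext, rule ext)
    fix i i0
    show "mmult f n C i i0 = idm n i i0"
    proof (cases "i < n \<and> i0 < n")
      case True
      have "mmult f n C i i0 = (\<Sum>j<m. f i j * cc i0 j)"
      proof -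
        have "mmult f n C i i0 = (\<Sum>j<n. f i j * C j i0)" unfolding mmult_def by simp
        also have "\<dots> = (\<Sum>j<m. f i j * C j i0) + (\<Sum>j\<in>{m..<n}. f i j * C j i0)"
          using mn by (intro sum_split_at) simp
        also have "(\<Sum>j\<in>{m..<n}. f i j * C j i0) = 0" unfolding C_def by simp
        also have "(\<Sum>j<m. f i j * C j i0) = (\<Sum>j<m. f i j * cc i0 j)" unfolding C_def using True by simp
        finally show ?thesis by simp
      qed
      then show ?thesis using cc True unfolding idm_def by auto
    next
      case False
      then show ?thesis using fm unfolding mmult_def idm_def C_def in_mat_def by auto
    qed
  qed
  have "injective_mat n n C"
    unfolding injective_mat_def
  proof (intro allI impI)
    fix v :: "nat \<Rightarrow> 'k" and j
    assume v: "\<forall>j\<ge>n. v j = 0" and Cv: "\<forall>i<n. (\<Sum>j<n. C i j * v j) = 0"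
    have Cv': "(\<Sum>k<n. C i k * v k) = 0" for i
    proof (cases "i < n")
      case True then show ?thesis using Cv by simp
    next
      case False then show ?thesis using Cm unfolding in_mat_def by simp
    qed
    have "(\<Sum>k<n. idm n j k * v k) = (\<Sum>k<n. if k = j then (if j < n then v k else 0) else 0)"
      unfolding idm_def by (intro sum.cong) auto
    also have "\<dots> = v j" using v by (simp add: sum_delta_lt)
    finally have vj: "v j = (\<Sum>k<n. idm n j k * v k)" by simp
    define vm where "vm = (\<lambda>i (j::nat). if j = 0 then v i else (0::'k))"
    have "(\<Sum>k<n. idm n j k * v k) = mmult (idm n) n vm j 0" unfolding mmult_def vm_def by simp
    also have "\<dots> = mmult f n (mmult C n vm) j 0" unfolding fC[symmetric] mmult_assoc by simp
    also have "\<dots> = 0" unfolding mmult_def vm_def using Cv' by simp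
    finally show "v j = 0" using vj by simp
  qed
  then have dC: "det (tmat n C) \<noteq> 0" using inj_det Cm by blast
  have "mmult C n (invn n C) = idm n" by (rule invn_right[OF dC Cm])
  then have "mmult C n (invn n C) m m = idm n m m" by simp
  moreover have "mmult C n (invn n C) m m = 0" unfolding mmult_def C_def by simp
  moreover have "idm n m m = 1" unfolding idm_def using mn by simp
  ultimately show False by (metis zero_neq_one)
qed

lemma basis_completion:
  fixes f :: "nat \<Rightarrow> nat \<Rightarrow> 'k::field"
  assumes "in_mat n m f" "injective_mat n m f" "m \<le> n"
  shows "\<exists>g. in_mat n n g \<and> det (tmat n g) \<noteq> 0 \<and> (\<forall>i j. j < m \<longrightarrow> g i j = f i j)"
  using assms
proof (induction "n - m" arbitrary: m f)
  case 0
  then have "m = n" by simp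
  then show ?case using 0 inj_det by blast
next
  case (Suc k)
  then have mn: "m < n" by simp
  obtain i0 where i0: "i0 < n" "\<not> (\<exists>c. (\<forall>i<n. (\<Sum>j<m. f i j * c j) = (if i = i0 then 1 else 0)))"
    using unit_not_in_span[OF Suc.prems(1) mn] by blast
  define f' where "f' = (\<lambda>i j. if j < m then f i j else if j = m \<and> i = i0 then 1 else (0::'k))"
  have f'm: "in_mat n (Suc m) f'" using Suc.prems(1) i0 unfolding f'_def in_mat_def by auto
  have sumf': "(\<Sum>j<Suc m. f' i j * v j) = (\<Sum>j<m. f i j * v j) + (if i = i0 then v m else 0)" for i v
    unfolding f'_def by simp
  have f'i: "injective_mat n (Suc m) f'"
    unfolding injective_mat_def
  proof (intro allI impI)
    fix v :: "nat \<Rightarrow> 'k" and j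
    assume v: "\<forall>j\<ge>Suc m. v j = 0" and fv: "\<forall>i<n. (\<Sum>j<Suc m. f' i j * v j) = 0"
    have vm: "v m = 0"
    proof (rule ccontr)
      assume vm: "v m \<noteq> 0"
      have "\<forall>i<n. (\<Sum>j<m. f i j * (- v j / v m)) = (if i = i0 then 1 else 0)"
      proof (intro allI impI)
        fix i assume i: "i < n"
        have e: "(\<Sum>j<m. f i j * v j) + (if i = i0 then v m else 0) = 0" using fv i sumf' by simp
        have e2: "- (\<Sum>j<m. f i j * v j) = (if i = i0 then v m else 0)" using e by (simp only: neg_eq_iff_add_eq_0)
        have "(\<Sum>j<m. f i j * (- v j / v m)) = - (\<Sum>j<m. f i j * v j) / v m"
          by (simp add: sum_divide_distrib sum_negf)
        also have "\<dots> = (if i = i0 then v m else 0) / v m" by (simp only: e2)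
        also have "\<dots> = (if i = i0 then 1 else 0)" using vm by simp
        finally show "(\<Sum>j<m. f i j * (- v j / v m)) = (if i = i0 then 1 else 0)" .
      qed
      then have "\<exists>c. \<forall>i<n. (\<Sum>j<m. f i j * c j) = (if i = i0 then 1 else 0)"
        by (intro exI[of _ "\<lambda>j. - v j / v m"])
      with i0(2) show False by blast
    qed
    define w where "w j = (if j < m then v j else 0)" for j
    have "\<forall>i<n. (\<Sum>j<m. f i j * w j) = 0"
    proof (intro allI impI)
      fix i assume i: "i < n"
      have "(\<Sum>j<m. f i j * w j) = (\<Sum>j<m. f i j * v j)" unfolding w_def by simp
      also have "\<dots> = (\<Sum>j<Suc m. f' i j * v j)" by (simp only: sumf' vm) simp
      also have "\<dots> = 0" using fv i by blast
      finally show "(\<Sum>j<m. f i j * w j) = 0" .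
    qed
    moreover have "\<forall>j\<ge>m. w j = 0" unfolding w_def by simp
    ultimately have "\<forall>j. w j = 0" using Suc.prems(2) unfolding injective_mat_def by blast
    then show "v j = 0"
    proof -
      assume w0: "\<forall>j. w j = 0"
      consider "j < m" | "j = m" | "j \<ge> Suc m" by linarith
      then show "v j = 0"
      proof cases
        case 1 then show ?thesis using w0 unfolding w_def by metis
      next
        case 2 then show ?thesis using vm by simp
      next
        case 3 then show ?thesis using v by simp
      qed
    qed
  qed
  have "k = n - Suc m" using Suc.hyps(2) by simp
  have "\<exists>g. in_mat n n g \<and> det (tmat n g) \<noteq> 0 \<and> (\<forall>i j. j < Suc m \<longrightarrow> g i j = f' i j)"
    by (rule Suc.hyps(1)[of "Suc m" f', OF \<open>k = n - Suc m\<close> f'm f'i]) (use mn in simp)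
  then obtain g where g: "in_mat n n g" "det (tmat n g) \<noteq> 0" "\<forall>i j. j < Suc m \<longrightarrow> g i j = f' i j"
    by blast
  have "\<forall>i j. j < m \<longrightarrow> g i j = f i j" using g(3) unfolding f'_def by simp
  then show ?case using g(1,2) by blast
qed


lemma lin_aux:
  fixes c :: "'p \<Rightarrow> 'k::field"
  assumes "finite S"
  shows "(\<Sum>p\<in>S. c p * (\<Sum>l<m. (\<Sum>k<n. P i k * M p k l) * Q l j)) =
         (\<Sum>l<m. (\<Sum>k<n. P i k * (\<Sum>p\<in>S. c p * M p k l)) * Q l j)"
  using assms
proof (induction S rule: finite_induct)
  case empty then show ?case by simp
next
  case (insert a S)
  have "(\<Sum>p\<in>insert a S. c p * (\<Sum>l<m. (\<Sum>k<n. P i k * M p k l) * Q l j)) =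
     c a * (\<Sum>l<m. (\<Sum>k<n. P i k * M a k l) * Q l j) + (\<Sum>l<m. (\<Sum>k<n. P i k * (\<Sum>p\<in>S. c p * M p k l)) * Q l j)"
    using insert by simp
  also have "\<dots> = (\<Sum>l<m. (\<Sum>k<n. P i k * (c a * M a k l + (\<Sum>p\<in>S. c p * M p k l))) * Q l j)"
    by (simp add: sum_distrib_left sum.distrib[symmetric] distrib_left distrib_right mult_ac)
  also have "\<dots> = (\<Sum>l<m. (\<Sum>k<n. P i k * (\<Sum>p\<in>insert a S. c p * M p k l)) * Q l j)"
    using insert by simp
  finally show ?case .
qed

lemma mmult_idm_right_gen:
  "mmult A n (idm m) = (\<lambda>i j. if j < m \<and> j < n then A i j else 0)"
  for A :: "nat \<Rightarrow> nat \<Rightarrow> 'k::field"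
proof (rule ext, rule ext)
  fix i j
  have "mmult A n (idm m) i j = (\<Sum>k<n. if k = j then (if j < m then A i k else 0) else 0)"
    unfolding mmult_def idm_def by (intro sum.cong) auto
  also have "\<dots> = (if j < m \<and> j < n then A i j else 0)" by (simp add: sum_delta_lt)
  finally show "mmult A n (idm m) i j = (if j < m \<and> j < n then A i j else 0)" .
qed

lemma in_mat_path_eval:
  assumes "valid_path s t x l" "is_mat_family s t D D B"
  shows "in_mat (D (path_end t x l)) (D x) (path_eval t D B x l)"
  using assms
proof (induction l arbitrary: x)
  case Nil then show ?case by (simp add: in_mat_idm)
next
  case (Cons a as)
  then have "s a = x" "valid_path s t (t a) as" by auto
  then have "in_mat (D (path_end t (t a) as)) (D (t a)) (path_eval t D B (t a) as)" using Cons by blast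
  moreover have "in_mat (D (t a)) (D x) (B a)" using Cons.prems(2) \<open>s a = x\<close> unfolding is_mat_family_def by blast
  ultimately show ?case by (simp add: in_mat_mmult)
qed

definition conjr :: "('a \<Rightarrow> 'v) \<Rightarrow> ('a \<Rightarrow> 'v) \<Rightarrow> ('v \<Rightarrow> nat) \<Rightarrow> ('v \<Rightarrow> nat \<Rightarrow> nat \<Rightarrow> 'k::field)
   \<Rightarrow> ('a \<Rightarrow> nat \<Rightarrow> nat \<Rightarrow> 'k) \<Rightarrow> ('v \<Rightarrow> nat \<Rightarrow> nat \<Rightarrow> 'k) \<Rightarrow> ('a \<Rightarrow> nat \<Rightarrow> nat \<Rightarrow> 'k)" where
  "conjr s t D P B Q = (\<lambda>a. mmult (mmult (P (t a)) (D (t a)) (B a)) (D (s a)) (Q (s a)))"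

definition invpair :: "('v \<Rightarrow> nat) \<Rightarrow> ('v \<Rightarrow> nat \<Rightarrow> nat \<Rightarrow> 'k::field) \<Rightarrow> ('v \<Rightarrow> nat \<Rightarrow> nat \<Rightarrow> 'k) \<Rightarrow> bool" where
  "invpair D P Q \<longleftrightarrow> (\<forall>x. in_mat (D x) (D x) (P x) \<and> in_mat (D x) (D x) (Q x) \<and>
      mmult (P x) (D x) (Q x) = idm (D x) \<and> mmult (Q x) (D x) (P x) = idm (D x))"

lemma invpair_sym: "invpair D P Q \<Longrightarrow> invpair D Q P"
  unfolding invpair_def by blast

lemma path_eval_conj:
  assumes "valid_path s t x l" "is_mat_family s t D D B" "invpair D P Q"
  shows "path_eval t D (conjr s t D P B Q) x l =
    mmult (mmult (P (path_end t x l)) (D (path_end t x l)) (path_eval t D B x l)) (D x) (Q x)"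
  using assms
proof (induction l arbitrary: x)
  case Nil
  have "in_mat (D x) (D x) (P x)" "mmult (P x) (D x) (Q x) = idm (D x)" using Nil.prems(3) unfolding invpair_def by auto
  then show ?case by (simp add: mmult_idm_right)
next
  case (Cons a as)
  then have sa: "s a = x" and va: "valid_path s t (t a) as" by auto
  let ?e = "path_end t (t a) as"
  have IH: "path_eval t D (conjr s t D P B Q) (t a) as =
    mmult (mmult (P ?e) (D ?e) (path_eval t D B (t a) as)) (D (t a)) (Q (t a))"
    using Cons.IH[OF va Cons.prems(2,3)] .
  have Ba: "in_mat (D (t a)) (D x) (B a)" using Cons.prems(2) sa unfolding is_mat_family_def by blast
  have QP: "mmult (Q (t a)) (D (t a)) (P (t a)) = idm (D (t a))" using Cons.prems(3) unfolding invpair_def by blast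
  have X: "mmult (Q (t a)) (D (t a)) (mmult (P (t a)) (D (t a)) (mmult (B a) (D x) (Q x))) = mmult (B a) (D x) (Q x)"
  proof -
    have "mmult (Q (t a)) (D (t a)) (mmult (P (t a)) (D (t a)) (mmult (B a) (D x) (Q x))) =
        mmult (idm (D (t a))) (D (t a)) (mmult (B a) (D x) (Q x))"
      by (simp add: mmult_assoc[symmetric] QP)
    also have "\<dots> = mmult (B a) (D x) (Q x)"
      by (rule mmult_idm_left[of _ "D x"]) (rule in_mat_mmult[OF Ba], use Cons.prems(3) in \<open>auto simp: invpair_def\<close>)
    finally show ?thesis .
  qed
  show ?case
    using IH sa X by (simp add: conjr_def mmult_assoc)
qed

lemma satisfies_conj:
  assumes sat: "satisfies t D B \<rho>" and pa: "\<rho> \<in> pathalg s t"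
    and B: "is_mat_family s t D D B" and PQ: "invpair D P Q"
  shows "satisfies t D (conjr s t D P B Q) \<rho>"
  unfolding satisfies_def
proof (intro allI)
  fix x y i j
  let ?S = "{p. \<rho> p \<noteq> 0 \<and> fst p = x \<and> path_end t x (snd p) = y}"
  have fin: "finite ?S" using pa unfolding pathalg_def by (auto intro: finite_subset)
  have valid: "valid_path s t x (snd p)" if "p \<in> ?S" for p
    using pa that unfolding pathalg_def by auto
  have "(\<Sum>p\<in>?S. \<rho> p * path_eval t D (conjr s t D P B Q) x (snd p) i j) =
     (\<Sum>p\<in>?S. \<rho> p * (\<Sum>l<D x. (\<Sum>k<D y. P y i k * path_eval t D B x (snd p) k l) * Q x l j))"
    using path_eval_conj[OF valid B PQ] by (intro sum.cong) (auto simp: mmult_def)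
  also have "\<dots> = (\<Sum>l<D x. (\<Sum>k<D y. P y i k * (\<Sum>p\<in>?S. \<rho> p * path_eval t D B x (snd p) k l)) * Q x l j)"
    by (rule lin_aux[OF fin])
  also have "\<dots> = 0" using sat unfolding satisfies_def by simp
  finally show "(\<Sum>p\<in>?S. \<rho> p * path_eval t D (conjr s t D P B Q) x (snd p) i j) = 0" .
qed

lemma is_mat_family_conj:
  assumes "is_mat_family s t D D B" "invpair D P Q"
  shows "is_mat_family s t D D (conjr s t D P B Q)"
  unfolding is_mat_family_def conjr_def
proof
  fix a
  have "in_mat (D (t a)) (D (s a)) (B a)" using assms(1) unfolding is_mat_family_def by blast
  moreover have "in_mat (D (t a)) (D (t a)) (P (t a))" "in_mat (D (s a)) (D (s a)) (Q (s a))"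
    using assms(2) unfolding invpair_def by auto
  ultimately show "in_mat (D (t a)) (D (s a)) (mmult (mmult (P (t a)) (D (t a)) (B a)) (D (s a)) (Q (s a)))"
    by (blast intro: in_mat_mmult)
qed

lemma rep_conj:
  assumes "B \<in> rep s t I D" "I \<subseteq> pathalg s t" "invpair D P Q"
  shows "conjr s t D P B Q \<in> rep s t I D"
  using assms unfolding rep_def by (auto intro: is_mat_family_conj satisfies_conj)

lemma conj_conj:
  assumes "is_mat_family s t D D B" "invpair D P Q"
  shows "conjr s t D Q (conjr s t D P B Q) P = B"
proof (rule ext)
  fix a
  have i: "in_mat (D (t a)) (D (s a)) (B a)" using assms(1) unfolding is_mat_family_def by blast
  have "conjr s t D Q (conjr s t D P B Q) P a =
     mmult (mmult (mmult (Q (t a)) (D (t a)) (P (t a))) (D (t a)) (B a)) (D (s a)) (mmult (Q (s a)) (D (s a)) (P (s a)))"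
    unfolding conjr_def by (simp add: mmult_assoc)
  also have "\<dots> = B a" using assms(2) i unfolding invpair_def by (simp add: mmult_idm_left mmult_idm_right)
  finally show "conjr s t D Q (conjr s t D P B Q) P a = B a" .
qed

lemma path_eval_zero: "l \<noteq> [] \<Longrightarrow> path_eval t D (\<lambda>a i j. 0) x l = (\<lambda>i j. 0)"
  by (cases l) (auto simp: mmult_def)

lemma zero_rep:
  assumes "admissible_ideal s t I"
  shows "(\<lambda>a i j. 0) \<in> rep s t I D"
  unfolding rep_def
proof (intro CollectI conjI ballI)
  show "is_mat_family s t D D (\<lambda>a i j. 0)" unfolding is_mat_family_def in_mat_def by simp
  fix \<rho> assume r: "\<rho> \<in> I"
  have A: "\<forall>\<rho>\<in>I. \<forall>p. \<rho> p \<noteq> 0 \<longrightarrow> length (snd p) \<ge> 2"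
    using assms unfolding admissible_ideal_def by blast
  have len: "snd p \<noteq> []" if "\<rho> p \<noteq> 0" for p
  proof -
    have "length (snd p) \<ge> 2" using A r that by blast
    then show ?thesis by auto
  qed
  show "satisfies t D (\<lambda>a i j. 0) \<rho>"
    unfolding satisfies_def
  proof (intro allI sum.neutral ballI)
    fix x y i j p assume "p \<in> {p. \<rho> p \<noteq> 0 \<and> fst p = x \<and> path_end t x (snd p) = y}"
    then have "snd p \<noteq> []" using len by blast
    then show "\<rho> p * path_eval t D (\<lambda>a i j. 0) x (snd p) i j = 0" by (simp add: path_eval_zero)
  qed
qed


lemma sum_shift_split:
  "(\<Sum>k<d + e. g k) = (\<Sum>k<d. g k) + (\<Sum>k<e. g (k + d))" for g :: "nat \<Rightarrow> 'a::comm_monoid_add"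
proof -
  have "(\<Sum>k<d + e. g k) = (\<Sum>k<d. g k) + (\<Sum>k\<in>{d..<d+e}. g k)" by (rule sum_split_at) simp
  also have "(\<Sum>k\<in>{d..<d+e}. g k) = (\<Sum>k<e. g (k + d))"
    using sum.shift_bounds_nat_ivl[of g 0 d e] by (simp add: atLeast0LessThan add.commute)
  finally show ?thesis .
qed

lemma path_eval_block:
  assumes vp: "valid_path s t x l"
  shows "(\<forall>i j. i \<ge> d (path_end t x l) \<longrightarrow> j < d x \<longrightarrow>
            path_eval t (\<lambda>x. d x + e x) (blockrep s t d V Z U) x l i j = 0) \<and>
         (\<forall>i j. path_eval t (\<lambda>x. d x + e x) (blockrep s t d V Z U) x l (i + d (path_end t x l)) (j + d x) =
            path_eval t e U x l i j)"
  using vp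
proof (induction l arbitrary: x)
  case Nil
  show ?case by (auto simp: idm_def)
next
  case (Cons a as)
  then have sa: "s a = x" and va: "valid_path s t (t a) as" by auto
  let ?B = "blockrep s t d V Z U" and ?D = "\<lambda>x. d x + e x"
  let ?e = "path_end t (t a) as"
  let ?PB = "path_eval t ?D ?B (t a) as" and ?PU = "path_eval t e U (t a) as"
  have IH1: "\<And>i j. i \<ge> d ?e \<Longrightarrow> j < d (t a) \<Longrightarrow> ?PB i j = 0" and
       IH2: "\<And>i j. ?PB (i + d ?e) (j + d (t a)) = ?PU i j" using Cons.IH[OF va] by auto
  have pe: "path_end t x (a # as) = ?e" by simp
  have A: "path_eval t ?D ?B x (a # as) = mmult ?PB (?D (t a)) (?B a)" by simp
  have part1: "mmult ?PB (?D (t a)) (?B a) i j = 0" if "i \<ge> d ?e" "j < d x" for i j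
  proof -
    have "mmult ?PB (?D (t a)) (?B a) i j = (\<Sum>k<d (t a). ?PB i k * ?B a k j) + (\<Sum>k<e (t a). ?PB i (k + d (t a)) * ?B a (k + d (t a)) j)"
      unfolding mmult_def by (rule sum_shift_split)
    also have "\<dots> = 0"
      using that IH1 sa by (simp add: blockrep_def)
    finally show ?thesis .
  qed
  have part2: "mmult ?PB (?D (t a)) (?B a) (i + d ?e) (j + d x) = mmult ?PU (e (t a)) (U a) i j" for i j
  proof -
    have "mmult ?PB (?D (t a)) (?B a) (i + d ?e) (j + d x) =
       (\<Sum>k<d (t a). ?PB (i + d ?e) k * ?B a k (j + d x)) + (\<Sum>k<e (t a). ?PB (i + d ?e) (k + d (t a)) * ?B a (k + d (t a)) (j + d x))"
      unfolding mmult_def by (rule sum_shift_split)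
    also have "(\<Sum>k<d (t a). ?PB (i + d ?e) k * ?B a k (j + d x)) = 0"
      using IH1 by simp
    also have "(\<Sum>k<e (t a). ?PB (i + d ?e) (k + d (t a)) * ?B a (k + d (t a)) (j + d x)) = (\<Sum>k<e (t a). ?PU i k * U a k j)"
      using IH2 sa by (simp add: blockrep_def)
    finally show ?thesis unfolding mmult_def by simp
  qed
  show ?case using part1 part2 A pe by simp
qed

lemma rep_block_U:
  assumes sat: "satisfies t (\<lambda>x. d x + e x) (blockrep s t d V Z U) \<rho>" and pa: "\<rho> \<in> pathalg s t"
  shows "satisfies t e U \<rho>"
  unfolding satisfies_def
proof (intro allI)
  fix x y i j
  let ?S = "{p. \<rho> p \<noteq> 0 \<and> fst p = x \<and> path_end t x (snd p) = y}"
  have "(\<Sum>p\<in>?S. \<rho> p * path_eval t e U x (snd p) i j) =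
     (\<Sum>p\<in>?S. \<rho> p * path_eval t (\<lambda>x. d x + e x) (blockrep s t d V Z U) x (snd p) (i + d y) (j + d x))"
  proof (rule sum.cong)
    fix p assume p: "p \<in> ?S"
    then have "valid_path s t x (snd p)" using pa unfolding pathalg_def by auto
    then show "\<rho> p * path_eval t e U x (snd p) i j =
      \<rho> p * path_eval t (\<lambda>x. d x + e x) (blockrep s t d V Z U) x (snd p) (i + d y) (j + d x)"
      using path_eval_block[of s t x "snd p" d e V Z U] p by simp
  qed simp
  also have "\<dots> = 0" using sat unfolding satisfies_def by blast
  finally show "(\<Sum>p\<in>?S. \<rho> p * path_eval t e U x (snd p) i j) = 0" .
qed


lemma blockrep_family:
  assumes "is_mat_family s t p p V" "is_mat_family s t p q Z" "is_mat_family s t q q U"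
  shows "is_mat_family s t (\<lambda>x. p x + q x) (\<lambda>x. p x + q x) (blockrep s t p V Z U)"
  unfolding is_mat_family_def in_mat_def
proof (intro allI impI)
  fix a i j assume ij: "p (t a) + q (t a) \<le> i \<or> p (s a) + q (s a) \<le> j"
  have V: "in_mat (p (t a)) (p (s a)) (V a)" and Z: "in_mat (p (t a)) (q (s a)) (Z a)"
    and U: "in_mat (q (t a)) (q (s a)) (U a)" using assms unfolding is_mat_family_def by auto
  show "blockrep s t p V Z U a i j = 0"
    using ij V Z U unfolding blockrep_def in_mat_def by auto
qed

lemma injective_from_inverse:
  fixes G H :: "nat \<Rightarrow> nat \<Rightarrow> 'k::field"
  assumes G: "in_mat n n G" and HG: "mmult H n G = idm n" and mn: "m \<le> n"
  shows "injective_mat n m (mmult G n (idm m))"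
proof -
  define F where "F = mmult G n (idm m)"
  have F: "in_mat n m F" unfolding F_def using G in_mat_idm by (rule in_mat_mmult)
  have "injective_mat n m F"
    unfolding injective_mat_def
  proof (intro allI impI)
    fix v :: "nat \<Rightarrow> 'k" and j
    assume v: "\<forall>j\<ge>m. v j = 0" and Fv: "\<forall>i<n. (\<Sum>j<m. F i j * v j) = 0"
    define vm where "vm = (\<lambda>i (j::nat). if j = 0 then v i else (0::'k))"
    have vmm: "in_mat m 1 vm" unfolding vm_def in_mat_def using v by auto
    have z: "mmult F m vm = (\<lambda>i j. 0)"
    proof (rule ext, rule ext)
      fix i j
      show "mmult F m vm i j = 0"
      proof (cases "i < n \<and> j = 0")
        case True then show ?thesis using Fv unfolding mmult_def vm_def by simp
      next
        case False
        then show ?thesis using F unfolding mmult_def vm_def in_mat_def by auto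
      qed
    qed
    have "in_mat n 1 vm" using in_mat_mono[OF vmm mn] by simp
    then have "vm = mmult (idm n) n vm" by (simp add: mmult_idm_left)
    also have "\<dots> = mmult H n (mmult G n (mmult (idm m) m vm))"
      using vmm by (simp add: HG[symmetric] mmult_assoc mmult_idm_left)
    also have "\<dots> = mmult H n (mmult F m vm)" unfolding F_def by (simp add: mmult_assoc)
    also have "\<dots> = (\<lambda>i j. 0)" unfolding z by (simp add: mmult_def)
    finally have "vm j 0 = 0" by simp
    then show "v j = 0" unfolding vm_def by simp
  qed
  then show ?thesis unfolding F_def .
qed

lemma blockrep_iota:
  assumes V: "in_mat (p (t a)) (p (s a)) (V a)"
  shows "mmult (blockrep s t p V Z U a) (p (s a) + q (s a)) (idm (p (s a))) = V a"
proof (rule ext, rule ext)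
  fix i j
  show "mmult (blockrep s t p V Z U a) (p (s a) + q (s a)) (idm (p (s a))) i j = V a i j"
    unfolding mmult_idm_right_gen using V unfolding blockrep_def in_mat_def by auto
qed

lemma compose:
  fixes V :: "'a \<Rightarrow> nat \<Rightarrow> nat \<Rightarrow> 'k::field"
  assumes adm: "I \<subseteq> pathalg s t"
    and E: "(U, V, Z) \<in> extvar s t I q p"
    and GH: "invpair (\<lambda>x. p x + q x) G H"
  shows "(V, conjr s t (\<lambda>x. p x + q x) G (blockrep s t p V Z U) H,
          \<lambda>x. mmult (G x) (p x + q x) (idm (p x))) \<in> monovar s t I p (\<lambda>x. p x + q x)"
proof -
  let ?P = "\<lambda>x. p x + q x"
  let ?B = "blockrep s t p V Z U"
  let ?W = "conjr s t ?P G ?B H"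
  let ?f = "\<lambda>x. mmult (G x) (p x + q x) (idm (p x))"
  have U: "U \<in> rep s t I q" and V: "V \<in> rep s t I p" and Z: "Z \<in> Zset s t I q p U V"
    using E unfolding extvar_def by auto
  have Bf: "is_mat_family s t ?P ?P ?B"
    by (rule blockrep_family) (use U V Z in \<open>auto simp: rep_def Zset_def\<close>)
  have Brep: "?B \<in> rep s t I ?P" using Bf Z unfolding rep_def Zset_def by auto
  have Wrep: "?W \<in> rep s t I ?P" by (rule rep_conj[OF Brep adm GH])
  have Gx: "in_mat (?P x) (?P x) (G x)" "in_mat (?P x) (?P x) (H x)"
    "mmult (H x) (?P x) (G x) = idm (?P x)" "mmult (G x) (?P x) (H x) = idm (?P x)" for x
    using GH unfolding invpair_def by auto
  have fm: "in_mat (?P x) (p x) (?f x)" for x using Gx(1) in_mat_idm by (rule in_mat_mmult)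
  have finj: "injective_mat (?P x) (p x) (?f x)" for x
    by (rule injective_from_inverse[OF Gx(1) Gx(3)]) simp
  have Vm: "in_mat (p (t a)) (p (s a)) (V a)" for a using V unfolding rep_def is_mat_family_def by auto
  have hom: "is_hom s t p ?P V ?W ?f"
    unfolding is_hom_def
  proof
    fix a
    have idmP: "mmult (idm (?P (s a))) (?P (s a)) (idm (p (s a))) = (idm (p (s a)) :: nat \<Rightarrow> nat \<Rightarrow> 'k)"
      unfolding mmult_idm_right_gen by (intro ext) (auto simp: idm_def)
    have "mmult (?W a) (?P (s a)) (?f (s a)) =
       mmult (G (t a)) (?P (t a)) (mmult (?B a) (?P (s a)) (mmult (mmult (H (s a)) (?P (s a)) (G (s a))) (?P (s a)) (idm (p (s a)))))"
      unfolding conjr_def by (simp add: mmult_assoc)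
    also have "\<dots> = mmult (G (t a)) (?P (t a)) (V a)"
      unfolding Gx(3) idmP blockrep_iota[where s=s and t=t and p=p and V=V and a=a and q=q and Z=Z and U=U, OF Vm[of a]] by simp
    also have "\<dots> = mmult (?f (t a)) (p (t a)) (V a)"
      by (simp add: mmult_assoc mmult_idm_left[OF Vm])
    finally show "mmult (?W a) (?P (s a)) (?f (s a)) = mmult (?f (t a)) (p (t a)) (V a)" .
  qed
  show ?thesis unfolding monovar_def using V Wrep fm finj hom by auto
qed

lemma decomp:
  assumes adm: "I \<subseteq> pathalg s t"
    and M: "(V, W, f) \<in> monovar s t I p (\<lambda>x. p x + q x)"
    and GH: "invpair (\<lambda>x. p x + q x) G H"
    and Gf: "\<And>x i j. j < p x \<Longrightarrow> G x i j = f x i j"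
  shows "((\<lambda>a i j. conjr s t (\<lambda>x. p x + q x) H W G a (i + p (t a)) (j + p (s a))), V,
          (\<lambda>a i j. if i < p (t a) then conjr s t (\<lambda>x. p x + q x) H W G a i (j + p (s a)) else 0))
         \<in> extvar s t I q p \<and>
         W = conjr s t (\<lambda>x. p x + q x) G (blockrep s t p V
              (\<lambda>a i j. if i < p (t a) then conjr s t (\<lambda>x. p x + q x) H W G a i (j + p (s a)) else 0)
              (\<lambda>a i j. conjr s t (\<lambda>x. p x + q x) H W G a (i + p (t a)) (j + p (s a)))) H"
proof -
  let ?P = "\<lambda>x. p x + q x"
  define B where "B = conjr s t ?P H W G"
  define Ub where "Ub = (\<lambda>a i j. B a (i + p (t a)) (j + p (s a)))"
  define Zb where "Zb = (\<lambda>a i j. if i < p (t a) then B a i (j + p (s a)) else 0)"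
  have V: "V \<in> rep s t I p" and W: "W \<in> rep s t I ?P" and
    fx: "\<And>x. in_mat (?P x) (p x) (f x)" and hom: "is_hom s t p ?P V W f"
    using M unfolding monovar_def by auto
  have HG: "invpair ?P H G" using GH by (rule invpair_sym)
  have Brep: "B \<in> rep s t I ?P" unfolding B_def by (rule rep_conj[OF W adm HG])
  have Bm: "in_mat (?P (t a)) (?P (s a)) (B a)" for a using Brep unfolding rep_def is_mat_family_def by auto
  have Wm: "is_mat_family s t ?P ?P W" using W unfolding rep_def by auto
  have Vm: "in_mat (p (t a)) (p (s a)) (V a)" for a using V unfolding rep_def is_mat_family_def by auto
  have Gx: "in_mat (?P x) (?P x) (G x)" "in_mat (?P x) (?P x) (H x)"
    "mmult (H x) (?P x) (G x) = idm (?P x)" "mmult (G x) (?P x) (H x) = idm (?P x)" for x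
    using GH unfolding invpair_def by auto
  have Gi: "mmult (G x) (?P x) (idm (p x)) = f x" for x
  proof (rule ext, rule ext)
    fix i j
    show "mmult (G x) (?P x) (idm (p x)) i j = f x i j"
      unfolding mmult_idm_right_gen using fx[of x] Gf[of j x i] unfolding in_mat_def by auto
  qed
  have Bi: "B a i j = V a i j" if "j < p (s a)" for a i j
  proof -
    have "mmult (B a) (?P (s a)) (idm (p (s a))) = mmult (H (t a)) (?P (t a)) (mmult (W a) (?P (s a)) (f (s a)))"
      unfolding B_def conjr_def by (simp add: mmult_assoc Gi)
    also have "\<dots> = mmult (H (t a)) (?P (t a)) (mmult (f (t a)) (p (t a)) (V a))"
      using hom unfolding is_hom_def by simp
    also have "\<dots> = mmult (mmult (H (t a)) (?P (t a)) (G (t a))) (?P (t a)) (mmult (idm (p (t a))) (p (t a)) (V a))"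
      by (simp add: Gi[symmetric] mmult_assoc)
    also have "\<dots> = V a"
      unfolding Gx(3) mmult_idm_left[OF Vm]
      by (rule mmult_idm_left[OF in_mat_mono[OF Vm]]) auto
    finally have "mmult (B a) (?P (s a)) (idm (p (s a))) i j = V a i j" by simp
    then show ?thesis unfolding mmult_idm_right_gen using that by simp
  qed
  have blk: "blockrep s t p V Zb Ub = B"
  proof (rule ext, rule ext, rule ext)
    fix a i j
    show "blockrep s t p V Zb Ub a i j = B a i j"
    proof (cases "j < p (s a)")
      case True
      then show ?thesis using Bi[OF True] Vm[of a] unfolding blockrep_def in_mat_def by auto
    next
      case False
      then show ?thesis unfolding blockrep_def Zb_def Ub_def by auto
    qed
  qed
  have Wc: "W = conjr s t ?P G B H" unfolding B_def by (rule conj_conj[OF Wm HG, symmetric])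
  have Bsat: "\<forall>\<rho>\<in>I. satisfies t ?P (blockrep s t p V Zb Ub) \<rho>"
    using Brep unfolding blk rep_def by auto
  have Uf: "is_mat_family s t q q Ub"
    unfolding is_mat_family_def in_mat_def Ub_def using Bm unfolding in_mat_def by auto
  have Urep: "Ub \<in> rep s t I q"
    unfolding rep_def using Uf Bsat adm by (auto intro: rep_block_U)
  have Zf: "is_mat_family s t p q Zb"
    unfolding is_mat_family_def in_mat_def Zb_def using Bm unfolding in_mat_def by auto
  have "Zb \<in> Zset s t I q p Ub V" unfolding Zset_def using Zf Bsat by auto
  then have "(Ub, V, Zb) \<in> extvar s t I q p" unfolding extvar_def using Urep V by auto
  then show ?thesis using Wc unfolding Ub_def Zb_def B_def blk[unfolded Ub_def Zb_def B_def] by simp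
qed


lemma adm_pathalg: "admissible_ideal s t I \<Longrightarrow> I \<subseteq> pathalg s t"
  unfolding admissible_ideal_def two_sided_ideal_def by blast

lemma polyfun_if: "p \<in> polyfun \<Longrightarrow> q \<in> polyfun \<Longrightarrow> (\<lambda>z. if c then p z else q z) \<in> polyfun"
  by (cases c) auto

lemma tmat_idm: "tmat n (idm n) = (1\<^sub>m n :: 'k::field Matrix.mat)"
  unfolding tmat_def idm_def by (rule eq_matI) auto

lemma det_tmat_idm: "det (tmat n (idm n) :: 'k::field Matrix.mat) = 1"
  unfolding tmat_idm by simp

lemma invn_idm: "invn n (idm n) = (idm n :: nat \<Rightarrow> nat \<Rightarrow> 'k::field)"
proof -
  have d: "det (tmat n (idm n) :: 'k Matrix.mat) \<noteq> 0" by (simp add: tmat_idm)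
  have "mmult (invn n (idm n)) n (idm n) = (idm n :: nat \<Rightarrow> nat \<Rightarrow> 'k)"
    by (rule invn_left[OF d in_mat_idm])
  moreover have "mmult (invn n (idm n)) n (idm n) = (invn n (idm n) :: nat \<Rightarrow> nat \<Rightarrow> 'k)"
    by (rule mmult_idm_right[OF in_mat_invn])
  ultimately show ?thesis by simp
qed

lemma invpair_idm: "invpair D (\<lambda>x. idm (D x)) (\<lambda>x. (idm (D x) :: nat \<Rightarrow> nat \<Rightarrow> 'k::field))"
  unfolding invpair_def by (simp add: in_mat_idm mmult_idm_left[OF in_mat_idm])

lemma invpair_invn:
  assumes "\<And>x. in_mat (D x) (D x) (G x)" "\<And>x. det (tmat (D x) (G x)) \<noteq> 0"
  shows "invpair D G (\<lambda>x. invn (D x) (G x))"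
  unfolding invpair_def using assms by (simp add: in_mat_invn invn_left invn_right)

lemma mmult_zero_left: "mmult (\<lambda>i j. 0) n A = (\<lambda>i j. (0::'k::field))"
  unfolding mmult_def by simp

lemma mmult_zero_right: "mmult A n (\<lambda>i j. 0) = (\<lambda>i j. (0::'k::field))"
  unfolding mmult_def by simp

lemma coords3_simps[simp]:
  "coords3 (A, B, C) (Inl (a, i, j)) = A a i j"
  "coords3 (A, B, C) (Inr (Inl (b, i, j))) = B b i j"
  "coords3 (A, B, C) (Inr (Inr (x, i, j))) = C x i j"
  unfolding coords3_def by simp_all

lemma coords3_cases:
  obtains a i j where "c = Inl (a, i, j)" | b i j where "c = Inr (Inl (b, i, j))" | x i j where "c = Inr (Inr (x, i, j))"
  by (cases c rule: sum.exhaust; (metis prod_cases3 sum.exhaust))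

lemma regmap_coords3:
  assumes "\<And>a i j. reg S (\<lambda>z. A z a i j)" "\<And>b i j. reg S (\<lambda>z. B z b i j)" "\<And>x i j. reg S (\<lambda>z. C z x i j)"
  shows "regmap S (\<lambda>z. coords3 (A z, B z, C z))"
  unfolding regmap_def
proof
  fix c
  show "reg S (\<lambda>z. coords3 (A z, B z, C z) c)"
    by (cases c rule: coords3_cases) (simp_all add: assms)
qed

definition compl :: "('v \<Rightarrow> nat) \<Rightarrow> ('v \<Rightarrow> nat) \<Rightarrow> ('v \<Rightarrow> nat \<Rightarrow> nat \<Rightarrow> 'k::field) \<Rightarrow> 'v \<Rightarrow> nat \<Rightarrow> nat \<Rightarrow> 'k" where
  "compl d P f x i j = (if j < d x then f x i j else if i = j \<and> i < P x then 1 else 0)"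

lemma compl_idm: "d x \<le> P x \<Longrightarrow> compl d P (\<lambda>x. idm (d x)) x = (idm (P x) :: nat \<Rightarrow> nat \<Rightarrow> 'k::field)"
  unfolding compl_def idm_def by (intro ext) auto

lemma compl_in_mat: "in_mat (P x) (d x) (f x) \<Longrightarrow> d x \<le> P x \<Longrightarrow> in_mat (P x) (P x) (compl d P f x)"
  unfolding compl_def in_mat_def by auto

lemma mono_to_ext:
  fixes s t :: "'a::finite \<Rightarrow> 'v::finite" and I :: "(('v \<times> 'a list) \<Rightarrow> 'k::field) set"
  assumes adm: "admissible_ideal s t I"
    and irrM: "zariski_irreducible (coords3 ` monovar s t I d (\<lambda>x. d x + e x))"
  shows "zariski_irreducible (coords3 ` extvar s t I e d)"
proof -
  let ?P = "\<lambda>x. d x + e x"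
  have Ip: "I \<subseteq> pathalg s t" using adm by (rule adm_pathalg)
  define S where "S = coords3 ` monovar s t I d ?P"
  define Vz where "Vz z = (\<lambda>a i j. z (Inl (a, i, j)))" for z :: "('a \<times> nat \<times> nat) + ('a \<times> nat \<times> nat) + ('v \<times> nat \<times> nat) \<Rightarrow> 'k"
  define Wz where "Wz z = (\<lambda>a i j. z (Inr (Inl (a, i, j))))" for z :: "('a \<times> nat \<times> nat) + ('a \<times> nat \<times> nat) + ('v \<times> nat \<times> nat) \<Rightarrow> 'k"
  define fz where "fz z = (\<lambda>x i j. z (Inr (Inr (x, i, j))))" for z :: "('a \<times> nat \<times> nat) + ('a \<times> nat \<times> nat) + ('v \<times> nat \<times> nat) \<Rightarrow> 'k"
  define Gz where "Gz z = compl d ?P (fz z)" for z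
  define Hz where "Hz z = (\<lambda>x. invn (?P x) (Gz z x))" for z
  define Dz where "Dz z = (\<Prod>x\<in>UNIV. det (tmat (?P x) (Gz z x)))" for z
  define Om where "Om = {z \<in> S. Dz z \<noteq> 0}"
  define Bz where "Bz z = conjr s t ?P (Hz z) (Wz z) (Gz z)" for z
  define Psi where "Psi z = coords3 (\<lambda>a i j. Bz z a (i + d (t a)) (j + d (s a)), Vz z,
      \<lambda>a i j. if i < d (t a) then Bz z a i (j + d (s a)) else 0)" for z
  have Gpoly: "(\<lambda>z. Gz z x i j) \<in> polyfun" for x i j
    unfolding Gz_def compl_def fz_def by (intro polyfun_if pf_proj pf_const)
  have Dpoly: "Dz \<in> polyfun"
  proof -
    have "(\<lambda>z. \<Prod>x\<in>UNIV. det (tmat (?P x) (Gz z x))) \<in> polyfun"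
      by (rule polyfun_prod) (auto intro: polyfun_det_tmat Gpoly)
    then show ?thesis unfolding Dz_def[abs_def] .
  qed
  have detO: "det (tmat (?P x) (Gz z x)) \<noteq> 0" if "z \<in> Om" for z x
  proof -
    have "Dz z \<noteq> 0" using that Om_def by blast
    then show ?thesis unfolding Dz_def by (simp add: prod_zero_iff)
  qed
  have dP: "d x \<le> ?P x" for x by simp
  have ptE: "coords3 (V, conjr s t ?P (\<lambda>x. idm (?P x)) (blockrep s t d V Z U) (\<lambda>x. idm (?P x)),
               \<lambda>x. idm (d x)) \<in> Om \<and>
     Psi (coords3 (V, conjr s t ?P (\<lambda>x. idm (?P x)) (blockrep s t d V Z U) (\<lambda>x. idm (?P x)),
               \<lambda>x. idm (d x))) = coords3 (U, V, Z)"
    if E: "(U, V, Z) \<in> extvar s t I e d" for U V Z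
  proof -
    let ?Id = "\<lambda>x. (idm (?P x) :: nat \<Rightarrow> nat \<Rightarrow> 'k)"
    let ?B0 = "blockrep s t d V Z U"
    let ?W0 = "conjr s t ?P ?Id ?B0 ?Id"
    let ?z = "coords3 (V, ?W0, \<lambda>x. idm (d x))"
    have mono: "(V, ?W0, \<lambda>x. mmult (?Id x) (?P x) (idm (d x))) \<in> monovar s t I d ?P"
      by (rule compose[OF Ip E invpair_idm])
    have fe: "(\<lambda>x. mmult (?Id x) (?P x) (idm (d x))) = (\<lambda>x. idm (d x))"
      by (intro ext mmult_idm_left in_mat_mono[OF in_mat_idm]) auto
    have zS: "?z \<in> S" unfolding S_def using mono fe by (intro imageI) simp
    have Gz0: "Gz ?z x = ?Id x" for x
    proof -
      have "fz ?z = (\<lambda>x. idm (d x))" unfolding fz_def by (intro ext) simp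
      then show ?thesis unfolding Gz_def using compl_idm[where d=d and P="?P" and x=x] by simp
    qed
    have "Dz ?z = 1" unfolding Dz_def Gz0 det_tmat_idm by simp
    then have zO: "?z \<in> Om" unfolding Om_def using zS by simp
    have Hz0: "Hz ?z = ?Id" unfolding Hz_def Gz0 by (intro ext) (simp add: invn_idm)
    have Wz0: "Wz ?z = ?W0" unfolding Wz_def by (intro ext) simp
    have Vz0: "Vz ?z = V" unfolding Vz_def by (intro ext) simp
    have Bfam: "is_mat_family s t ?P ?P ?B0"
      by (rule blockrep_family) (use E in \<open>auto simp: extvar_def rep_def Zset_def\<close>)
    have Bz0: "Bz ?z = ?B0"
      unfolding Bz_def Hz0 Wz0 Gz0[abs_def]
      by (rule conj_conj[OF Bfam invpair_idm])
    have Zm: "in_mat (d (t a)) (e (s a)) (Z a)" for a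
      using E unfolding extvar_def Zset_def is_mat_family_def by auto
    have "Psi ?z = coords3 (U, V, Z)"
      unfolding Psi_def Bz0 Vz0
    proof -
      have "(\<lambda>a i j. ?B0 a (i + d (t a)) (j + d (s a))) = U"
        unfolding blockrep_def by (intro ext) simp
      moreover have "(\<lambda>a i j. if i < d (t a) then ?B0 a i (j + d (s a)) else 0) = Z"
        using Zm unfolding blockrep_def in_mat_def by (intro ext) auto
      ultimately show "coords3 (\<lambda>a i j. ?B0 a (i + d (t a)) (j + d (s a)), V,
          \<lambda>a i j. if i < d (t a) then ?B0 a i (j + d (s a)) else 0) = coords3 (U, V, Z)" by simp
    qed
    then show ?thesis using zO by simp
  qed
  have zero_ext: "((\<lambda>a i j. 0), (\<lambda>a i j. 0), (\<lambda>a i j. 0)) \<in> extvar s t I e d"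
  proof -
    have b0: "blockrep s t d (\<lambda>a i j. 0) (\<lambda>a i j. 0) (\<lambda>a i j. 0) = (\<lambda>a i j. (0::'k))"
      unfolding blockrep_def by (intro ext) simp
    show ?thesis unfolding extvar_def Zset_def
      using zero_rep[OF adm, of e] zero_rep[OF adm, of d] zero_rep[OF adm, of ?P]
      by (auto simp: rep_def is_mat_family_def in_mat_def b0)
  qed
  have Oirr: "zariski_irreducible Om"
    unfolding Om_def
  proof (rule irreducible_open[OF _ Dpoly])
    show "zariski_irreducible S" using irrM unfolding S_def .
    show "\<exists>x\<in>S. Dz x \<noteq> 0" using ptE[OF zero_ext] unfolding Om_def by blast
  qed
  have regB: "reg Om (\<lambda>z. Bz z a k l)" for a k l
  proof -
    have eq: "(\<lambda>z. Bz z a k l) = (\<lambda>z. \<Sum>l'<?P (s a). (\<Sum>k'<?P (t a). Hz z (t a) k k' * Wz z a k' l') * Gz z (s a) l' l)"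
      unfolding Bz_def conjr_def mmult_def by simp
    have "reg Om (\<lambda>z. \<Sum>l'<?P (s a). (\<Sum>k'<?P (t a). Hz z (t a) k k' * Wz z a k' l') * Gz z (s a) l' l)"
      unfolding Hz_def
      by (intro reg_sum reg_mult reg_invn[where M="\<lambda>z. Gz z (t a)"] reg_poly Gpoly finite_lessThan)
         (auto simp: Wz_def detO intro: pf_proj)
    then show ?thesis unfolding eq .
  qed
  have regPsi: "regmap Om Psi"
    unfolding Psi_def
    by (rule regmap_coords3) (auto simp: Vz_def intro: regB reg_poly pf_proj reg_if reg_const)
  have img: "Psi ` Om = coords3 ` extvar s t I e d"
  proof
    show "Psi ` Om \<subseteq> coords3 ` extvar s t I e d"
    proof
      fix w assume "w \<in> Psi ` Om"
      then obtain z where zO: "z \<in> Om" and w: "w = Psi z" by blast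
      then obtain V W f where m: "(V, W, f) \<in> monovar s t I d ?P" and z: "z = coords3 (V, W, f)"
        unfolding Om_def S_def by auto
      have Vz: "Vz z = V" unfolding Vz_def z by (intro ext) simp
      have Wz: "Wz z = W" unfolding Wz_def z by (intro ext) simp
      have fz: "fz z = f" unfolding fz_def z by (intro ext) simp
      have fm: "in_mat (?P x) (d x) (f x)" for x using m unfolding monovar_def by auto
      have Gm: "in_mat (?P x) (?P x) (Gz z x)" for x unfolding Gz_def fz using compl_in_mat[where P="?P" and d=d and f=f and x=x, OF fm[of x]] by simp
      have GH: "invpair ?P (Gz z) (Hz z)" unfolding Hz_def
        by (rule invpair_invn[OF Gm detO[OF zO]])
      have Gf: "Gz z x i j = f x i j" if "j < d x" for x i j
        unfolding Gz_def fz compl_def using that by simp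
      have inE: "((\<lambda>a i j. conjr s t ?P (Hz z) W (Gz z) a (i + d (t a)) (j + d (s a))), V,
          (\<lambda>a i j. if i < d (t a) then conjr s t ?P (Hz z) W (Gz z) a i (j + d (s a)) else 0))
         \<in> extvar s t I e d"
        by (rule conjunct1[OF decomp[OF Ip m GH Gf]])
      have eqP: "Psi z = coords3 ((\<lambda>a i j. conjr s t ?P (Hz z) W (Gz z) a (i + d (t a)) (j + d (s a))), V,
          (\<lambda>a i j. if i < d (t a) then conjr s t ?P (Hz z) W (Gz z) a i (j + d (s a)) else 0))"
        unfolding Psi_def Bz_def Vz Wz ..
      have "Psi z \<in> coords3 ` extvar s t I e d" by (rule image_eqI[where f=coords3, OF eqP inE])
      then show "w \<in> coords3 ` extvar s t I e d" unfolding w .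
    qed
  next
    show "coords3 ` extvar s t I e d \<subseteq> Psi ` Om"
    proof
      fix w assume "w \<in> coords3 ` extvar s t I e d"
      then obtain U V Z where E: "(U, V, Z) \<in> extvar s t I e d" and w: "w = coords3 (U, V, Z)" by auto
      have "coords3 (U, V, Z) \<in> Psi ` Om"
        by (rule image_eqI[where f=Psi, OF conjunct2[OF ptE[OF E], symmetric] conjunct1[OF ptE[OF E]]])
      then show "w \<in> Psi ` Om" unfolding w .
    qed
  qed
  show ?thesis using irreducible_image[OF Oirr regPsi] unfolding img .
qed


lemma mmult_compl_iota:
  assumes "in_mat n m f" "\<And>i j. j < m \<Longrightarrow> G i j = f i j" "m \<le> n"
  shows "mmult G n (idm m) = (f :: nat \<Rightarrow> nat \<Rightarrow> 'k::field)"
proof (rule ext, rule ext)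
  fix i j show "mmult G n (idm m) i j = f i j"
    unfolding mmult_idm_right_gen using assms unfolding in_mat_def by auto
qed

lemma ext_to_mono:
  fixes s t :: "'a::finite \<Rightarrow> 'v::finite" and I :: "(('v \<times> 'a list) \<Rightarrow> 'k::field) set"
  assumes alg: "alg_closed TYPE('k)" and adm: "admissible_ideal s t I"
    and irrE: "zariski_irreducible (coords3 ` extvar s t I q e)"
  shows "zariski_irreducible (coords3 ` monovar s t I e (\<lambda>x. e x + q x))"
proof -
  let ?P = "\<lambda>x. e x + q x"
  have Ip: "I \<subseteq> pathalg s t" using adm by (rule adm_pathalg)
  have inf: "infinite (UNIV :: 'k set)" using alg by (rule alg_closed_infinite)
  define E where "E = extvar s t I q e"
  define M where "M = monovar s t I e ?P"
  define Phi where "Phi b G = (case b of (U, V, Z) \<Rightarrow>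
      (V, conjr s t ?P G (blockrep s t e V Z U) (\<lambda>x. invn (?P x) (G x)), \<lambda>x. mmult (G x) (?P x) (idm (e x))))"
    for b :: "('a \<Rightarrow> nat \<Rightarrow> nat \<Rightarrow> 'k) \<times> ('a \<Rightarrow> nat \<Rightarrow> nat \<Rightarrow> 'k) \<times> ('a \<Rightarrow> nat \<Rightarrow> nat \<Rightarrow> 'k)"
    and G :: "'v \<Rightarrow> nat \<Rightarrow> nat \<Rightarrow> 'k"
  define good where "good G \<longleftrightarrow> (\<forall>x. in_mat (?P x) (?P x) (G x) \<and> det (tmat (?P x) (G x)) \<noteq> 0)"
    for G :: "'v \<Rightarrow> nat \<Rightarrow> nat \<Rightarrow> 'k"
  have PhiM: "Phi b G \<in> M" if "b \<in> E" "good G" for b G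
  proof -
    obtain U V Z where b: "b = (U, V, Z)" by (cases b) auto
    have "invpair ?P G (\<lambda>x. invn (?P x) (G x))"
      by (rule invpair_invn) (use that(2) in \<open>auto simp: good_def\<close>)
    from compose[OF Ip that(1)[unfolded b E_def] this]
    show ?thesis unfolding Phi_def b M_def by simp
  qed
  have Msurj: "\<exists>b G. b \<in> E \<and> good G \<and> m = Phi b G" if "m \<in> M" for m
  proof -
    obtain V W f where m: "m = (V, W, f)" by (cases m) auto
    have mM: "(V, W, f) \<in> monovar s t I e ?P" using that unfolding m M_def .
    have fx: "in_mat (?P x) (e x) (f x) \<and> injective_mat (?P x) (e x) (f x)" for x
      using mM unfolding monovar_def by auto
    have "\<forall>x. \<exists>g. in_mat (?P x) (?P x) g \<and> det (tmat (?P x) g) \<noteq> 0 \<and> (\<forall>i j. j < e x \<longrightarrow> g i j = f x i j)"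
      using fx basis_completion by (metis le_add1)
    then obtain G where G: "\<And>x. in_mat (?P x) (?P x) (G x) \<and> det (tmat (?P x) (G x)) \<noteq> 0 \<and>
        (\<forall>i j. j < e x \<longrightarrow> G x i j = f x i j)" by metis
    have gG: "good G" unfolding good_def using G by blast
    have GH: "invpair ?P G (\<lambda>x. invn (?P x) (G x))"
      by (rule invpair_invn) (use G in auto)
    have Gf: "\<And>x i j. j < e x \<Longrightarrow> G x i j = f x i j" using G by blast
    note D = decomp[OF Ip mM GH Gf]
    define B where "B = conjr s t ?P (\<lambda>x. invn (?P x) (G x)) W G"
    define b where "b = ((\<lambda>a i j. B a (i + e (t a)) (j + e (s a))), V,
          (\<lambda>a i j. if i < e (t a) then B a i (j + e (s a)) else 0))"
    have bE: "b \<in> E" unfolding b_def E_def B_def using D by blast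
    have W: "W = conjr s t ?P G (blockrep s t e V
              (\<lambda>a i j. if i < e (t a) then B a i (j + e (s a)) else 0)
              (\<lambda>a i j. B a (i + e (t a)) (j + e (s a)))) (\<lambda>x. invn (?P x) (G x))"
      unfolding B_def using D by blast
    have f: "(\<lambda>x. mmult (G x) (?P x) (idm (e x))) = f"
      by (intro ext mmult_compl_iota) (use fx Gf in auto)
    have "m = Phi b G" unfolding m Phi_def b_def using W f by simp
    then show ?thesis using bE gG by blast
  qed
  define Uz where "Uz z = (\<lambda>a i j. z (Inl (Inl (a, i, j))))"
    for z :: "(('a \<times> nat \<times> nat) + ('a \<times> nat \<times> nat) + ('a \<times> nat \<times> nat)) + unit \<Rightarrow> 'k"
  define Vz where "Vz z = (\<lambda>a i j. z (Inl (Inr (Inl (a, i, j)))))"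
    for z :: "(('a \<times> nat \<times> nat) + ('a \<times> nat \<times> nat) + ('a \<times> nat \<times> nat)) + unit \<Rightarrow> 'k"
  define Zz where "Zz z = (\<lambda>a i j. z (Inl (Inr (Inr (a, i, j)))))"
    for z :: "(('a \<times> nat \<times> nat) + ('a \<times> nat \<times> nat) + ('a \<times> nat \<times> nat)) + unit \<Rightarrow> 'k"
  have ne: "coords3 ` M \<noteq> {}"
  proof -
    obtain b where "b \<in> coords3 ` E" using zirrNE[OF irrE] unfolding E_def by blast
    then obtain b' where bE: "b' \<in> E" by blast
    have "good (\<lambda>x. idm (?P x))" unfolding good_def by (simp add: in_mat_idm det_tmat_idm)
    then show ?thesis using PhiM[OF bE] by blast
  qed
  have pairs: "\<exists>T\<subseteq>coords3 ` M. zariski_irreducible T \<and> w1 \<in> T \<and> w2 \<in> T"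
    if w1: "w1 \<in> coords3 ` M" and w2: "w2 \<in> coords3 ` M" for w1 w2
  proof -
    obtain m1 m2 where m1: "m1 \<in> M" "w1 = coords3 m1" and m2: "m2 \<in> M" "w2 = coords3 m2"
      using w1 w2 by blast
    obtain b1 G1 where bG1: "b1 \<in> E" "good G1" "m1 = Phi b1 G1" using Msurj[OF m1(1)] by blast
    obtain b2 G2 where bG2: "b2 \<in> E" "good G2" "m2 = Phi b2 G2" using Msurj[OF m2(1)] by blast
    define Gt where "Gt \<tau> = (\<lambda>x i j. G1 x i j + \<tau> * (G2 x i j - G1 x i j))" for \<tau> :: 'k
    have Gt0: "Gt 0 = G1" unfolding Gt_def by (intro ext) simp
    have Gt1: "Gt 1 = G2" unfolding Gt_def by (intro ext) simp
    have Gtm: "in_mat (?P x) (?P x) (Gt \<tau> x)" for \<tau> x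
      using bG1(2) bG2(2) unfolding good_def Gt_def in_mat_def by auto
    define Dy where "Dy y = (\<Prod>x\<in>UNIV. det (tmat (?P x) (Gt (y ()) x)))" for y :: "unit \<Rightarrow> 'k"
    define K where "K = {y. Dy y \<noteq> 0}"
    have Gtpoly: "(\<lambda>y. Gt (y ()) x i j) \<in> polyfun" for x i j
      unfolding Gt_def by (intro pf_add pf_mult pf_const polyfun_minus) (rule pf_proj)
    have Dypoly: "Dy \<in> polyfun"
    proof -
      have "(\<lambda>y. \<Prod>x\<in>UNIV. det (tmat (?P x) (Gt (y ()) x))) \<in> polyfun"
        by (rule polyfun_prod) (auto intro: polyfun_det_tmat Gtpoly)
      then show ?thesis unfolding Dy_def[abs_def] .
    qed
    have y0: "Dy (\<lambda>_. 0) \<noteq> 0" using bG1(2) unfolding Dy_def Gt0 good_def by (simp add: prod_zero_iff)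
    have y1: "Dy (\<lambda>_. 1) \<noteq> 0" using bG2(2) unfolding Dy_def Gt1 good_def by (simp add: prod_zero_iff)
    have Kirr: "zariski_irreducible K" unfolding K_def by (rule unit_open_irreducible[OF inf Dypoly y0])
    have goodK: "good (Gt (y ()))" if "y \<in> K" for y
    proof -
      have "Dy y \<noteq> 0" using that unfolding K_def by simp
      then show ?thesis unfolding good_def Dy_def using Gtm by (simp add: prod_zero_iff)
    qed
    define X where "X = {case_sum x y |x y. x \<in> coords3 ` E \<and> y \<in> K}"
    have Xirr: "zariski_irreducible X" unfolding X_def
      by (rule irreducible_product[OF irrE[folded E_def] Kirr])
    define F where "F z = coords3 (Phi (Uz z, Vz z, Zz z) (Gt (z (Inr ()))))" for z
    have Fpt: "F (case_sum (coords3 b) y) = coords3 (Phi b (Gt (y ())))" for b y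
    proof -
      obtain U V Z where b: "b = (U, V, Z)" by (cases b) auto
      have "Uz (case_sum (coords3 b) y) = U" "Vz (case_sum (coords3 b) y) = V" "Zz (case_sum (coords3 b) y) = Z"
        unfolding Uz_def Vz_def Zz_def b by (intro ext; simp)+
      then show ?thesis unfolding F_def b by simp
    qed
    have detX: "det (tmat (?P x) (Gt (z (Inr ())) x)) \<noteq> 0" if zX: "z \<in> X" for z x
    proof -
      obtain b y where "z = case_sum b y" "y \<in> K" using zX unfolding X_def by blast
      then have "good (Gt (z (Inr ())))" using goodK by simp
      then show ?thesis unfolding good_def by blast
    qed
    have Gzpoly: "(\<lambda>z. Gt (z (Inr ())) x i j) \<in> polyfun" for x i j
      unfolding Gt_def by (intro pf_add pf_mult pf_const polyfun_minus) (rule pf_proj)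
    have Bpoly: "(\<lambda>z. blockrep s t e (Vz z) (Zz z) (Uz z) a i j) \<in> polyfun" for a i j
      unfolding blockrep_def Uz_def Vz_def Zz_def by (intro polyfun_if pf_proj pf_const)
    have regF: "regmap X F"
      unfolding F_def Phi_def
    proof (simp only: prod.case, rule regmap_coords3)
      fix b i j
      show "reg X (\<lambda>z. Vz z b i j)" unfolding Vz_def by (rule reg_poly) (rule pf_proj)
    next
      fix a i j
      have eq: "(\<lambda>z. conjr s t ?P (Gt (z (Inr ()))) (blockrep s t e (Vz z) (Zz z) (Uz z))
              (\<lambda>x. invn (?P x) (Gt (z (Inr ())) x)) a i j) =
          (\<lambda>z. \<Sum>l<?P (s a). (\<Sum>k<?P (t a). Gt (z (Inr ())) (t a) i k * blockrep s t e (Vz z) (Zz z) (Uz z) a k l) *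
               invn (?P (s a)) (Gt (z (Inr ())) (s a)) l j)"
        unfolding conjr_def mmult_def by simp
      have "reg X (\<lambda>z. \<Sum>l<?P (s a). (\<Sum>k<?P (t a). Gt (z (Inr ())) (t a) i k * blockrep s t e (Vz z) (Zz z) (Uz z) a k l) *
               invn (?P (s a)) (Gt (z (Inr ())) (s a)) l j)"
        by (intro reg_sum reg_mult reg_invn[where M="\<lambda>z. Gt (z (Inr ())) (s a)"] reg_poly Gzpoly Bpoly finite_lessThan)
           (auto simp: detX)
      then show "reg X (\<lambda>z. conjr s t ?P (Gt (z (Inr ()))) (blockrep s t e (Vz z) (Zz z) (Uz z))
              (\<lambda>x. invn (?P x) (Gt (z (Inr ())) x)) a i j)" unfolding eq .
    next
      fix x i j
      show "reg X (\<lambda>z. mmult (Gt (z (Inr ())) x) (?P x) (idm (e x)) i j)"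
        unfolding mmult_def
        by (intro reg_poly polyfun_sum pf_mult Gzpoly pf_const finite_lessThan)
    qed
    have FX: "F ` X \<subseteq> coords3 ` M"
    proof
      fix w assume "w \<in> F ` X"
      then obtain x y where xy: "x \<in> coords3 ` E" "y \<in> K" "w = F (case_sum x y)" unfolding X_def by blast
      then obtain b where b: "b \<in> E" "x = coords3 b" by blast
      have "w = coords3 (Phi b (Gt (y ())))" using xy(3) b(2) Fpt by simp
      moreover have "Phi b (Gt (y ())) \<in> M" by (rule PhiM[OF b(1) goodK[OF xy(2)]])
      ultimately show "w \<in> coords3 ` M" by blast
    qed
    have in1: "w1 \<in> F ` X"
    proof -
      have "case_sum (coords3 b1) (\<lambda>_. 0) \<in> X" unfolding X_def K_def using bG1(1) y0 by blast
      moreover have "F (case_sum (coords3 b1) (\<lambda>_. 0)) = w1" unfolding Fpt Gt0 m1(2) bG1(3) by simp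
      ultimately show ?thesis by (metis image_eqI)
    qed
    have in2: "w2 \<in> F ` X"
    proof -
      have "case_sum (coords3 b2) (\<lambda>_. 1) \<in> X" unfolding X_def K_def using bG2(1) y1 by blast
      moreover have "F (case_sum (coords3 b2) (\<lambda>_. 1)) = w2" unfolding Fpt Gt1 m2(2) bG2(3) by simp
      ultimately show ?thesis by (metis image_eqI)
    qed
    show ?thesis using irreducible_image[OF Xirr regF] FX in1 in2 by blast
  qed
  show ?thesis unfolding M_def[symmetric] by (rule irreducible_pairs[OF ne pairs])
qed


theorem proposition3p2:
  fixes s t :: "'a::finite \<Rightarrow> 'v::finite"
    and I :: "(('v \<times> 'a list) \<Rightarrow> 'k::field) set"
  assumes "alg_closed TYPE('k)"
    and "admissible_ideal s t I"
  shows "ext_irreducible s t I \<longleftrightarrow> mono_irreducible s t I"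
proof
  assume ext: "ext_irreducible s t I"
  show "mono_irreducible s t I"
    unfolding mono_irreducible_def
  proof (intro allI impI)
    fix e d :: "'v \<Rightarrow> nat" assume le: "\<forall>x. e x \<le> d x"
    define q where "q x = d x - e x" for x
    have dq: "(\<lambda>x. e x + q x) = d" unfolding q_def proof (rule HOL.ext) fix x show "e x + (d x - e x) = d x" using le[rule_format, of x] by simp qed
    have "zariski_irreducible (coords3 ` extvar s t I q e)"
      using ext unfolding ext_irreducible_def by blast
    from ext_to_mono[OF assms this]
    show "zariski_irreducible (coords3 ` monovar s t I e d)" unfolding dq .
  qed
next
  assume mono: "mono_irreducible s t I"
  show "ext_irreducible s t I"
    unfolding ext_irreducible_def
  proof (intro allI)
    fix e d :: "'v \<Rightarrow> nat"
    have "zariski_irreducible (coords3 ` monovar s t I d (\<lambda>x. d x + e x))"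
      using mono unfolding mono_irreducible_def by simp
    then show "zariski_irreducible (coords3 ` extvar s t I e d)"
      by (rule mono_to_ext[OF assms(2)])
  qed
qed

end
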